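(* An object $(V,f,h)$ of $\mathcal R(P,I)$ is simple if and only if $f:P\to V$ is surjective and $h:V\to I$ is injective.
   Context: Let $\tilde Q$ be a finite acyclic quiver, $P$ a fixed projective representation and $I$ a fixed injective representation of $\tilde Q$ over $\mathbb C$ (finite-dimensional). The category $\mathcal R(P,I)$ has as objects triples $(V,f,h)$ with $V$ a finite-dimensional representation of $\tilde Q$, $f:P\to V$ and $h:V\to I$ morphisms of representations; a morphism $(V,f,h)\to(V',f',h')$ is a morphism of representations $g:V\to V'$ with $g\circ f=f'$ and $h'\circ g=h$. An object $(V,f,h)$ is called simple if there is no monomorphism $(V',f',h')\to(V,f,h)$ in $\mathcal R(P,I)$ that is not an isomorphism and no epimorphism $(V,f,h)\to(V'',f'',h'')$ in $\mathcal R(P,I)$ that is not an isomorphism. *)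

theory Defs
  imports "Jordan_Normal_Form.Matrix"
begin

text \<open>A finite-dimensional complex representation is given (up to
isomorphism, which is harmless) by a dimension vector d and, for every arrow
al : i -> j, a matrix of size d j x d i.\<close>

type_synonym ('v,'a) qrep = "('v \<Rightarrow> nat) \<times> ('a \<Rightarrow> complex mat)"

definition acyclic_quiver :: "('a::finite \<Rightarrow> 'v::finite) \<Rightarrow> ('a \<Rightarrow> 'v) \<Rightarrow> bool" where
  "acyclic_quiver s t \<longleftrightarrow> (\<forall>i. (i,i) \<notin> (range (\<lambda>al. (s al, t al)))\<^sup>+)"

definition dimv :: "('v,'a) qrep \<Rightarrow> 'v \<Rightarrow> nat" where "dimv V = fst V"
definition amap :: "('v,'a) qrep \<Rightarrow> 'a \<Rightarrow> complex mat" where "amap V = snd V"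

definition is_rep :: "('a \<Rightarrow> 'v) \<Rightarrow> ('a \<Rightarrow> 'v) \<Rightarrow> ('v,'a) qrep \<Rightarrow> bool" where
  "is_rep s t V \<longleftrightarrow> (\<forall>al. amap V al \<in> carrier_mat (dimv V (t al)) (dimv V (s al)))"

definition rep_hom :: "('a \<Rightarrow> 'v) \<Rightarrow> ('a \<Rightarrow> 'v) \<Rightarrow> ('v,'a) qrep \<Rightarrow> ('v,'a) qrep
    \<Rightarrow> ('v \<Rightarrow> complex mat) \<Rightarrow> bool" where
  "rep_hom s t V W g \<longleftrightarrow>
     (\<forall>i. g i \<in> carrier_mat (dimv W i) (dimv V i)) \<and>
     (\<forall>al. g (t al) * amap V al = amap W al * g (s al))"

definition comp_hom :: "('v \<Rightarrow> complex mat) \<Rightarrow> ('v \<Rightarrow> complex mat) \<Rightarrow> ('v \<Rightarrow> complex mat)" where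
  "comp_hom g f = (\<lambda>i. g i * f i)"

definition hom_surj :: "('v,'a) qrep \<Rightarrow> ('v,'a) qrep \<Rightarrow> ('v \<Rightarrow> complex mat) \<Rightarrow> bool" where
  "hom_surj V W g \<longleftrightarrow> (\<forall>i. \<forall>y \<in> carrier_vec (dimv W i). \<exists>x \<in> carrier_vec (dimv V i). g i *\<^sub>v x = y)"

definition hom_inj :: "('v,'a) qrep \<Rightarrow> ('v,'a) qrep \<Rightarrow> ('v \<Rightarrow> complex mat) \<Rightarrow> bool" where
  "hom_inj V W g \<longleftrightarrow> (\<forall>i. \<forall>x \<in> carrier_vec (dimv V i). \<forall>y \<in> carrier_vec (dimv V i).
       g i *\<^sub>v x = g i *\<^sub>v y \<longrightarrow> x = y)"

text \<open>Projective / injective objects of the category of finite-dimensional representations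
(epimorphisms resp. monomorphisms there are exactly the pointwise surjective resp.
injective morphisms).\<close>
definition projective_rep :: "('a \<Rightarrow> 'v) \<Rightarrow> ('a \<Rightarrow> 'v) \<Rightarrow> ('v,'a) qrep \<Rightarrow> bool" where
  "projective_rep s t P \<longleftrightarrow> is_rep s t P \<and>
     (\<forall>V W p u. is_rep s t V \<and> is_rep s t W \<and> rep_hom s t V W p \<and> hom_surj V W p \<and>
        rep_hom s t P W u \<longrightarrow> (\<exists>v. rep_hom s t P V v \<and> comp_hom p v = u))"

definition injective_rep :: "('a \<Rightarrow> 'v) \<Rightarrow> ('a \<Rightarrow> 'v) \<Rightarrow> ('v,'a) qrep \<Rightarrow> bool" where
  "injective_rep s t I \<longleftrightarrow> is_rep s t I \<and>
     (\<forall>V W j u. is_rep s t V \<and> is_rep s t W \<and> rep_hom s t V W j \<and> hom_inj V W j \<and>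
        rep_hom s t V I u \<longrightarrow> (\<exists>v. rep_hom s t W I v \<and> comp_hom v j = u))"

type_synonym ('v,'a) robj = "('v,'a) qrep \<times> ('v \<Rightarrow> complex mat) \<times> ('v \<Rightarrow> complex mat)"

definition R_obj :: "('a \<Rightarrow> 'v) \<Rightarrow> ('a \<Rightarrow> 'v) \<Rightarrow> ('v,'a) qrep \<Rightarrow> ('v,'a) qrep \<Rightarrow> ('v,'a) robj \<Rightarrow> bool" where
  "R_obj s t P I X \<longleftrightarrow> (case X of (V,f,h) \<Rightarrow>
      is_rep s t V \<and> rep_hom s t P V f \<and> rep_hom s t V I h)"

definition R_hom :: "('a \<Rightarrow> 'v) \<Rightarrow> ('a \<Rightarrow> 'v) \<Rightarrow> ('v,'a) qrep \<Rightarrow> ('v,'a) qrep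
     \<Rightarrow> ('v,'a) robj \<Rightarrow> ('v,'a) robj \<Rightarrow> ('v \<Rightarrow> complex mat) \<Rightarrow> bool" where
  "R_hom s t P I X Y g \<longleftrightarrow> R_obj s t P I X \<and> R_obj s t P I Y \<and>
     (case X of (V,f,h) \<Rightarrow> case Y of (V',f',h') \<Rightarrow>
        rep_hom s t V V' g \<and> comp_hom g f = f' \<and> comp_hom h' g = h)"

definition R_id :: "('v,'a) robj \<Rightarrow> ('v \<Rightarrow> complex mat)" where
  "R_id X = (\<lambda>i. 1\<^sub>m (dimv (fst X) i))"

definition R_iso :: "('a \<Rightarrow> 'v) \<Rightarrow> ('a \<Rightarrow> 'v) \<Rightarrow> ('v,'a) qrep \<Rightarrow> ('v,'a) qrep
     \<Rightarrow> ('v,'a) robj \<Rightarrow> ('v,'a) robj \<Rightarrow> ('v \<Rightarrow> complex mat) \<Rightarrow> bool" where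
  "R_iso s t P I X Y g \<longleftrightarrow> R_hom s t P I X Y g \<and>
     (\<exists>g'. R_hom s t P I Y X g' \<and> comp_hom g' g = R_id X \<and> comp_hom g g' = R_id Y)"

definition R_mono :: "('a \<Rightarrow> 'v) \<Rightarrow> ('a \<Rightarrow> 'v) \<Rightarrow> ('v,'a) qrep \<Rightarrow> ('v,'a) qrep
     \<Rightarrow> ('v,'a) robj \<Rightarrow> ('v,'a) robj \<Rightarrow> ('v \<Rightarrow> complex mat) \<Rightarrow> bool" where
  "R_mono s t P I X Y g \<longleftrightarrow> R_hom s t P I X Y g \<and>
     (\<forall>Z u v. R_hom s t P I Z X u \<and> R_hom s t P I Z X v \<and> comp_hom g u = comp_hom g v \<longrightarrow> u = v)"

definition R_epi :: "('a \<Rightarrow> 'v) \<Rightarrow> ('a \<Rightarrow> 'v) \<Rightarrow> ('v,'a) qrep \<Rightarrow> ('v,'a) qrep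
     \<Rightarrow> ('v,'a) robj \<Rightarrow> ('v,'a) robj \<Rightarrow> ('v \<Rightarrow> complex mat) \<Rightarrow> bool" where
  "R_epi s t P I X Y g \<longleftrightarrow> R_hom s t P I X Y g \<and>
     (\<forall>Z u v. R_hom s t P I Y Z u \<and> R_hom s t P I Y Z v \<and> comp_hom u g = comp_hom v g \<longrightarrow> u = v)"

definition R_simple :: "('a \<Rightarrow> 'v) \<Rightarrow> ('a \<Rightarrow> 'v) \<Rightarrow> ('v,'a) qrep \<Rightarrow> ('v,'a) qrep
     \<Rightarrow> ('v,'a) robj \<Rightarrow> bool" where
  "R_simple s t P I X \<longleftrightarrow>
     \<not> (\<exists>Y g. R_mono s t P I Y X g \<and> \<not> R_iso s t P I Y X g) \<and>
     \<not> (\<exists>Y g. R_epi s t P I X Y g \<and> \<not> R_iso s t P I X Y g)"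

end

theory Submission
  imports Defs "Jordan_Normal_Form.Gauss_Jordan_Elimination"
begin

lemma pivot_tail:
  assumes p: "pivot_fun E f nc" and d: "dim_row E = nr"
    and i: "f i = nc" "i \<le> i'" "i' < nr"
  shows "f i' = nc"
  using i
proof (induction i' rule: nat_induct)
  case 0 then show ?case by simp
next
  case (Suc k)
  note pD = pivot_funD[OF d p]
  show ?case
  proof (cases "i = Suc k")
    case True then show ?thesis using Suc by simp
  next
    case False
    then have "f k = nc" using Suc by auto
    moreover have "f (Suc k) \<le> nc" using pD(1) Suc by auto
    moreover have "f (Suc k) > f k \<or> f (Suc k) = nc" using pD(3)[of k] Suc by auto
    ultimately show ?thesis by linarith
  qed
qed

lemma rank_fact:
  fixes A :: "'a::field mat"
  assumes A: "A \<in> carrier_mat n m"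
  shows "\<exists>r B C L R. B \<in> carrier_mat n r \<and> C \<in> carrier_mat r m \<and> L \<in> carrier_mat r n
     \<and> R \<in> carrier_mat m r \<and> A = B * C \<and> L * B = 1\<^sub>m r \<and> C * R = 1\<^sub>m r"
proof -
  obtain E where gj: "gauss_jordan_single A = E" by auto
  note G = gauss_jordan_single[OF A gj]
  from G(4) obtain P Q where EPA: "E = P * A" and P: "P \<in> carrier_mat n n" and Q: "Q \<in> carrier_mat n n"
    and PQ: "P * Q = 1\<^sub>m n" and QP: "Q * P = 1\<^sub>m n" by auto
  have E: "E \<in> carrier_mat n m" by (rule G(2))
  from G(3) obtain f where p: "pivot_fun E f m" unfolding row_echelon_form_def using E by auto
  have dE: "dim_row E = n" using E by auto
  note pD = pivot_funD[OF dE p]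
  define r where "r = (if \<exists>i<n. f i = m then LEAST i. i < n \<and> f i = m else n)"
  have rn: "r \<le> n"
  proof (cases "\<exists>i<n. f i = m")
    case True
    then obtain i where "i < n \<and> f i = m" by auto
    then have "(LEAST i. i < n \<and> f i = m) \<le> i" by (rule Least_le)
    then show ?thesis using True \<open>i < n \<and> f i = m\<close> unfolding r_def by auto
  next
    case False then show ?thesis unfolding r_def by auto
  qed
  have rf: "i < r \<longleftrightarrow> f i < m" if i: "i < n" for i
  proof (cases "\<exists>i<n. f i = m")
    case True
    define l where "l = (LEAST i. i < n \<and> f i = m)"
    have l: "l < n \<and> f l = m" unfolding l_def by (rule LeastI_ex) (use True in auto)
    have r: "r = l" using True unfolding r_def l_def by simp
    show ?thesis
    proof
      assume "i < r"
      then have "\<not> (i < n \<and> f i = m)" using r l_def not_less_Least by blast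
      then show "f i < m" using pD(1)[OF i] i by auto
    next
      assume "f i < m"
      show "i < r"
      proof (rule ccontr)
        assume "\<not> i < r"
        then have "f i = m" using pivot_tail[OF p dE, of l i] l r i by auto
        then show False using \<open>f i < m\<close> by simp
      qed
    qed
  next
    case False
    then have "f i \<noteq> m" using i by auto
    then show ?thesis using pD(1)[OF i] i False unfolding r_def by auto
  qed
  define B where "B = mat n r (\<lambda>(i,j). Q $$ (i,j))"
  define L where "L = mat r n (\<lambda>(i,j). P $$ (i,j))"
  define C where "C = mat r m (\<lambda>(i,j). E $$ (i,j))"
  define R :: "'a mat" where "R = mat m r (\<lambda>(j,k). if j = f k then 1 else 0)"
  have Bc: "B \<in> carrier_mat n r" and Lc: "L \<in> carrier_mat r n" and Cc: "C \<in> carrier_mat r m"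
    and Rc: "R \<in> carrier_mat m r" unfolding B_def L_def C_def R_def by auto
  have LB: "L * B = 1\<^sub>m r"
  proof (rule eq_matI)
    fix i j assume ij: "i < dim_row (1\<^sub>m r)" "j < dim_col (1\<^sub>m r)"
    then have "i < n" "j < n" using rn by auto
    have "(L * B) $$ (i,j) = (\<Sum>k<n. P $$ (i,k) * Q $$ (k,j))"
      using ij rn unfolding L_def B_def by (auto simp: scalar_prod_def lessThan_atLeast0 intro!: sum.cong)
    also have "\<dots> = (P * Q) $$ (i,j)" using P Q \<open>i<n\<close> \<open>j<n\<close>
      by (auto simp: scalar_prod_def lessThan_atLeast0 intro!: sum.cong)
    also have "\<dots> = 1\<^sub>m r $$ (i,j)" using PQ ij \<open>i<n\<close> \<open>j<n\<close> by auto
    finally show "(L * B) $$ (i,j) = 1\<^sub>m r $$ (i,j)" .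
  qed (insert Lc Bc, auto)
  have CR: "C * R = 1\<^sub>m r"
  proof (rule eq_matI)
    fix i k assume ij: "i < dim_row (1\<^sub>m r)" "k < dim_col (1\<^sub>m r)"
    then have i: "i < n" "i < r" and k: "k < n" "k < r" using rn by auto
    have fk: "f k < m" using rf[OF k(1)] k by simp
    have "(C * R) $$ (i,k) = (\<Sum>j<m. E $$ (i,j) * (if j = f k then 1 else 0))"
      using ij unfolding C_def R_def by (auto simp: scalar_prod_def lessThan_atLeast0 intro!: sum.cong)
    also have "\<dots> = E $$ (i, f k)"
      using fk by (simp add: if_distrib[of "(*) _"] sum.delta cong: if_cong)
    also have "\<dots> = 1\<^sub>m r $$ (i,k)"
    proof (cases "i = k")
      case True then show ?thesis using pD(4)[OF k(1)] fk i k by simp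
    next
      case False then show ?thesis using pD(5)[OF k(1) fk i(1)] i k by simp
    qed
    finally show "(C * R) $$ (i,k) = 1\<^sub>m r $$ (i,k)" .
  qed (insert Cc Rc, auto)
  have ABC: "A = B * C"
  proof -
    have "B * C = Q * E"
    proof (rule eq_matI)
      fix i j assume ij: "i < dim_row (Q * E)" "j < dim_col (Q * E)"
      then have i: "i < n" and j: "j < m" using Q E by auto
      have "(B * C) $$ (i,j) = (\<Sum>k\<in>{0..<r}. Q $$ (i,k) * E $$ (k,j))"
        using i j unfolding B_def C_def by (auto simp: scalar_prod_def intro!: sum.cong)
      also have "\<dots> = (\<Sum>k\<in>{0..<n}. Q $$ (i,k) * E $$ (k,j))"
      proof (rule sum.mono_neutral_left)
        show "\<forall>k\<in>{0..<n} - {0..<r}. Q $$ (i, k) * E $$ (k, j) = 0"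
        proof
          fix k assume "k \<in> {0..<n} - {0..<r}"
          then have k: "k < n" "\<not> k < r" by auto
          then have "f k = m" using rf[OF k(1)] pD(1)[OF k(1)] by auto
          then have "E $$ (k,j) = 0" using pD(2)[OF k(1)] j by auto
          then show "Q $$ (i, k) * E $$ (k, j) = 0" by simp
        qed
      qed (use rn in auto)
      also have "\<dots> = (Q * E) $$ (i,j)" using Q E i j by (auto simp: scalar_prod_def intro!: sum.cong)
      finally show "(B * C) $$ (i,j) = (Q * E) $$ (i,j)" .
    qed (insert Q E Bc Cc, auto)
    also have "\<dots> = Q * P * A" using Q P A EPA by simp
    also have "\<dots> = A" using QP A by simp
    finally show ?thesis by simp
  qed
  show ?thesis using Bc Cc Lc Rc ABC LB CR by blast
qed

lemma assoc_dim: assumes "dim_col A = dim_row B" "dim_col B = dim_row C" shows "A * B * C = A * (B * C)"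
proof -
  have a: "A \<in> carrier_mat (dim_row A) (dim_col A)" by (rule carrier_matI) (rule refl)+
  have b: "B \<in> carrier_mat (dim_col A) (dim_col B)" using assms(1) by (intro carrier_matI) simp_all
  have c: "C \<in> carrier_mat (dim_col B) (dim_col C)" using assms(2) by (intro carrier_matI) simp_all
  show ?thesis by (rule assoc_mult_mat[OF a b c])
qed

lemma assoc_dim_vec: assumes "dim_col A = dim_row B" "dim_col B = dim_vec v" shows "A * B *\<^sub>v v = A *\<^sub>v (B *\<^sub>v v)"
proof -
  have a: "A \<in> carrier_mat (dim_row A) (dim_col A)" by (rule carrier_matI) (rule refl)+
  have b: "B \<in> carrier_mat (dim_col A) (dim_col B)" using assms(1) by (intro carrier_matI) simp_all
  have c: "v \<in> carrier_vec (dim_col B)" using assms(2) by (intro carrier_vecI) simp_all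
  show ?thesis by (rule assoc_mult_mat_vec[OF a b c])
qed

lemma mult_zero_vec_right[simp]: "(A :: 'a :: comm_ring_1 mat) \<in> carrier_mat n m \<Longrightarrow> A *\<^sub>v 0\<^sub>v m = 0\<^sub>v n"
  by auto

lemma minus_zero_mat[simp]: "(M :: 'a :: group_add mat) \<in> carrier_mat n p \<Longrightarrow> M - 0\<^sub>m n p = M"
  by (rule eq_matI) auto

lemma mat_eq_vecI:
  fixes A B :: "'a::comm_ring_1 mat"
  assumes A: "A \<in> carrier_mat m n" and B: "B \<in> carrier_mat m n"
    and eq: "\<And>v. v \<in> carrier_vec n \<Longrightarrow> A *\<^sub>v v = B *\<^sub>v v"
  shows "A = B"
proof (rule eq_matI)
  fix i j assume i: "i < dim_row B" and j: "j < dim_col B"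
  have "A $$ (i,j) = (A *\<^sub>v unit_vec n j) $ i" using A B i j by (simp add: scalar_prod_right_unit)
  also have "\<dots> = (B *\<^sub>v unit_vec n j) $ i" using eq[of "unit_vec n j"] by simp
  also have "\<dots> = B $$ (i,j)" using A B i j by (simp add: scalar_prod_right_unit)
  finally show "A $$ (i,j) = B $$ (i,j)" .
qed (use A B in auto)

lemma ker_fact:
  fixes G :: "'a::field mat"
  assumes G: "G \<in> carrier_mat m n"
  shows "\<exists>k K L. K \<in> carrier_mat n k \<and> L \<in> carrier_mat k n \<and> G * K = 0\<^sub>m m k \<and> L * K = 1\<^sub>m k
     \<and> (\<forall>p M. M \<in> carrier_mat n p \<longrightarrow> G * M = 0\<^sub>m m p \<longrightarrow> K * (L * M) = M)
     \<and> (\<forall>x \<in> carrier_vec n. G *\<^sub>v x = 0\<^sub>v m \<longrightarrow> K *\<^sub>v (L *\<^sub>v x) = x)"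
proof -
  obtain r B C L R where B: "B \<in> carrier_mat m r" and C: "C \<in> carrier_mat r n" and L: "L \<in> carrier_mat r m"
    and R: "R \<in> carrier_mat n r" and GBC: "G = B * C" and LB: "L * B = 1\<^sub>m r" and CR: "C * R = 1\<^sub>m r"
    using rank_fact[OF G] by (elim exE conjE) blast
  define E where "E = 1\<^sub>m n - R * C"
  have E: "E \<in> carrier_mat n n" unfolding E_def using R C by auto
  obtain k K C' L' R' where K: "K \<in> carrier_mat n k" and C': "C' \<in> carrier_mat k n" and L': "L' \<in> carrier_mat k n"
    and R': "R' \<in> carrier_mat n k" and EKC: "E = K * C'" and LK: "L' * K = 1\<^sub>m k" and CR': "C' * R' = 1\<^sub>m k"
    using rank_fact[OF E] by (elim exE conjE) blast
  have CE: "C * E = 0\<^sub>m r n"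
  proof -
    have "C * E = C - C * R * C" unfolding E_def using C R mult_minus_distrib_mat[OF C one_carrier_mat[of n] mult_carrier_mat[OF R C]] by simp
    also have "C * R * C = C" using CR C by simp
    finally show ?thesis using C by simp
  qed
  have CK: "C * K = 0\<^sub>m r k"
  proof -
    have "C * K = C * (K * (C' * R'))" using CR' K by simp
    also have "\<dots> = (C * E) * R'" using C K C' R' EKC by (simp add: assoc_dim)
    finally show ?thesis using CE R' by simp
  qed
  have GK: "G * K = 0\<^sub>m m k" using GBC B C K CK by simp
  have mat: "K * (L' * M) = M" if M: "M \<in> carrier_mat n p" and GM: "G * M = 0\<^sub>m m p" for p M
  proof -
    have "L * (G * M) = (L * B) * (C * M)" using GBC B C L M by (simp add: assoc_dim)
    then have "C * M = L * (G * M)" using LB C M by simp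
    then have CM: "C * M = 0\<^sub>m r p" using GM L by simp
    have "E * M = M - R * (C * M)" unfolding E_def using M R C by (simp add: minus_mult_distrib_mat[of _ n n])
    then have EM: "E * M = M" using CM M R by simp
    have "K * (L' * M) = K * (L' * (K * (C' * M)))" using EM EKC K C' M by simp
    also have "\<dots> = K * ((L' * K) * (C' * M))" using K L' C' M by (simp add: assoc_dim)
    also have "\<dots> = K * (C' * M)" using K L' C' M LK by simp
    also have "\<dots> = M" using EM EKC K C' M by simp
    finally show ?thesis .
  qed
  have vec: "K *\<^sub>v (L' *\<^sub>v x) = x" if x: "x \<in> carrier_vec n" and Gx: "G *\<^sub>v x = 0\<^sub>v m" for x
  proof -
    have "L *\<^sub>v (G *\<^sub>v x) = (L * B) *\<^sub>v (C *\<^sub>v x)" using GBC B C L x by (simp add: assoc_dim_vec)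
    then have "C *\<^sub>v x = L *\<^sub>v (G *\<^sub>v x)" using LB C x by simp
    then have CM: "C *\<^sub>v x = 0\<^sub>v r" using Gx L by auto
    have "E *\<^sub>v x = x - R *\<^sub>v (C *\<^sub>v x)" unfolding E_def using x R C by (simp add: minus_mult_distrib_mat_vec[of _ n n])
    then have EM: "E *\<^sub>v x = x" using CM x R by simp
    have "K *\<^sub>v (L' *\<^sub>v x) = K *\<^sub>v (L' *\<^sub>v (K *\<^sub>v (C' *\<^sub>v x)))" using EM EKC K C' x by simp
    also have "\<dots> = K *\<^sub>v ((L' * K) *\<^sub>v (C' *\<^sub>v x))" using K L' C' x by (simp add: assoc_dim_vec)
    also have "\<dots> = K *\<^sub>v (C' *\<^sub>v x)" using K L' C' x LK by simp
    also have "\<dots> = x" using EM EKC K C' x by simp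
    finally show ?thesis .
  qed
  show ?thesis
    apply (rule exI[of _ k], rule exI[of _ K], rule exI[of _ L'])
    by (intro conjI allI impI ballI K L' GK LK mat vec; assumption)
qed

lemma coker_fact:
  fixes G :: "'a::field mat"
  assumes G: "G \<in> carrier_mat m n"
  shows "\<exists>q Q R'. Q \<in> carrier_mat q m \<and> R' \<in> carrier_mat m q \<and> Q * G = 0\<^sub>m q n \<and> Q * R' = 1\<^sub>m q
     \<and> (\<forall>p M. M \<in> carrier_mat p m \<longrightarrow> M * G = 0\<^sub>m p n \<longrightarrow> (M * R') * Q = M)
     \<and> (\<forall>y \<in> carrier_vec m. Q *\<^sub>v y = 0\<^sub>v q \<longrightarrow> (\<exists>x \<in> carrier_vec n. G *\<^sub>v x = y))"
proof -
  obtain r B C L R where B: "B \<in> carrier_mat m r" and C: "C \<in> carrier_mat r n" and L: "L \<in> carrier_mat r m"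
    and R: "R \<in> carrier_mat n r" and GBC: "G = B * C" and LB: "L * B = 1\<^sub>m r" and CR: "C * R = 1\<^sub>m r"
    using rank_fact[OF G] by (elim exE conjE) blast
  define E where "E = 1\<^sub>m m - B * L"
  have E: "E \<in> carrier_mat m m" unfolding E_def using B L by auto
  obtain q B' C' L' R' where B': "B' \<in> carrier_mat m q" and C': "C' \<in> carrier_mat q m" and L': "L' \<in> carrier_mat q m"
    and R': "R' \<in> carrier_mat m q" and EBC: "E = B' * C'" and LB': "L' * B' = 1\<^sub>m q" and CR': "C' * R' = 1\<^sub>m q"
    using rank_fact[OF E] by (elim exE conjE) blast
  have EB: "E * B = 0\<^sub>m m r"
  proof -
    have "E * B = B - B * L * B" unfolding E_def
      using B L add_mult_distrib_mat minus_mult_distrib_mat[OF one_carrier_mat[of m] mult_carrier_mat[OF B L] B] by simp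
    also have "B * L * B = B" using LB B L by (simp add: assoc_dim)
    finally show ?thesis using B by simp
  qed
  have CB: "C' * B = 0\<^sub>m q r"
  proof -
    have "C' * B = (L' * B') * (C' * B)" using LB' C' B by simp
    also have "\<dots> = L' * (E * B)" using L' B' C' B EBC by (simp add: assoc_dim)
    finally show ?thesis using EB L' by simp
  qed
  have QG: "C' * G = 0\<^sub>m q n"
  proof -
    have "C' * G = (C' * B) * C" using GBC C' B C by (simp add: assoc_dim)
    then show ?thesis using CB C by simp
  qed
  have mat: "(M * R') * C' = M" if M: "M \<in> carrier_mat p m" and MG: "M * G = 0\<^sub>m p n" for p M
  proof -
    have "M * B = (M * B) * (C * R)" using CR M B by simp
    also have "\<dots> = (M * G) * R" using GBC M B C R by (simp add: assoc_dim)
    finally have MB: "M * B = 0\<^sub>m p r" using MG R by simp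
    have "M * E = M - (M * B) * L" unfolding E_def using M B L
      mult_minus_distrib_mat[OF M one_carrier_mat[of m] mult_carrier_mat[OF B L]] by (simp add: assoc_dim)
    then have ME: "M * E = M" using MB M L by simp
    have "(M * R') * C' = ((M * E) * R') * C'" using ME by simp
    also have "\<dots> = (M * B') * ((C' * R') * C')" using EBC M B' C' R' by (simp add: assoc_dim)
    also have "\<dots> = (M * B') * C'" using CR' C' by simp
    also have "\<dots> = M * E" using EBC M B' C' by (simp add: assoc_dim)
    finally show ?thesis using ME by simp
  qed
  have vec: "\<exists>x \<in> carrier_vec n. G *\<^sub>v x = y" if y: "y \<in> carrier_vec m" and Qy: "C' *\<^sub>v y = 0\<^sub>v q" for y
  proof -
    have "E *\<^sub>v y = B' *\<^sub>v (C' *\<^sub>v y)" using EBC B' C' y by (simp add: assoc_dim_vec)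
    then have Ey: "E *\<^sub>v y = 0\<^sub>v m" using Qy B' by auto
    have "E *\<^sub>v y = y - B *\<^sub>v (L *\<^sub>v y)" unfolding E_def using y B L
      by (simp add: minus_mult_distrib_mat_vec[of _ m m] assoc_dim_vec)
    then have d: "y - B *\<^sub>v (L *\<^sub>v y) = 0\<^sub>v m" using Ey by simp
    have yBL: "y = B *\<^sub>v (L *\<^sub>v y)"
    proof (rule eq_vecI)
      fix i assume "i < dim_vec (B *\<^sub>v (L *\<^sub>v y))"
      then have i: "i < m" using B by simp
      have "(y - B *\<^sub>v (L *\<^sub>v y)) $ i = 0\<^sub>v m $ i" using d by simp
      then show "y $ i = (B *\<^sub>v (L *\<^sub>v y)) $ i" using i y B by simp
    qed (use y B in auto)
    have "G *\<^sub>v (R *\<^sub>v (L *\<^sub>v y)) = B *\<^sub>v ((C * R) *\<^sub>v (L *\<^sub>v y))" using GBC B C R L y by (simp add: assoc_dim_vec)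
    also have "\<dots> = y" using CR L y yBL by simp
    finally show ?thesis using R L y by (intro bexI[of _ "R *\<^sub>v (L *\<^sub>v y)"]) auto
  qed
  show ?thesis
    apply (rule exI[of _ q], rule exI[of _ C'], rule exI[of _ R'])
    by (intro conjI allI impI ballI C' R' QG CR' mat vec; assumption)
qed

lemma inv_fact:
  fixes G :: "'a::field mat"
  assumes G: "G \<in> carrier_mat m n"
    and surj: "\<forall>y \<in> carrier_vec m. \<exists>x \<in> carrier_vec n. G *\<^sub>v x = y"
    and inj: "\<forall>x \<in> carrier_vec n. \<forall>y \<in> carrier_vec n. G *\<^sub>v x = G *\<^sub>v y \<longrightarrow> x = y"
  shows "\<exists>H. H \<in> carrier_mat n m \<and> H * G = 1\<^sub>m n \<and> G * H = 1\<^sub>m m"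
proof -
  obtain r B C L R where B: "B \<in> carrier_mat m r" and C: "C \<in> carrier_mat r n" and L: "L \<in> carrier_mat r m"
    and R: "R \<in> carrier_mat n r" and GBC: "G = B * C" and LB: "L * B = 1\<^sub>m r" and CR: "C * R = 1\<^sub>m r"
    using rank_fact[OF G] by (elim exE conjE) blast
  have H: "R * L \<in> carrier_mat n m" using R L by simp
  have GH: "G * (R * L) = 1\<^sub>m m"
  proof -
    have "G * (R * L) = B * (C * R) * L" using GBC B C R L by (simp add: assoc_dim)
    also have "\<dots> = B * L" using CR B by simp
    also have "\<dots> = 1\<^sub>m m"
    proof (rule mat_eq_vecI[of _ m m])
      fix y :: "'a vec" assume y: "y \<in> carrier_vec m"
      then obtain x where x: "x \<in> carrier_vec n" and Gx: "G *\<^sub>v x = y" using surj by auto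
      have "(B * L) *\<^sub>v y = B *\<^sub>v (L *\<^sub>v y)" using y B L by (simp add: assoc_dim_vec)
      also have "\<dots> = B *\<^sub>v ((L * B) *\<^sub>v (C *\<^sub>v x))" using Gx GBC B L C x by (simp add: assoc_dim_vec)
      also have "\<dots> = y" using LB Gx GBC B C x by (simp add: assoc_dim_vec)
      finally show "(B * L) *\<^sub>v y = 1\<^sub>m m *\<^sub>v y" using y by simp
    qed (use B L in auto)
    finally show ?thesis .
  qed
  have HG: "(R * L) * G = 1\<^sub>m n"
  proof -
    have "(R * L) * G = R * (L * B) * C" using GBC B C R L by (simp add: assoc_dim)
    also have "\<dots> = R * C" using LB R by simp
    also have "\<dots> = 1\<^sub>m n"
    proof (rule mat_eq_vecI[of _ n n])
      fix x :: "'a vec" assume x: "x \<in> carrier_vec n"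
      have "G *\<^sub>v ((R * C) *\<^sub>v x) = B *\<^sub>v ((C * R) *\<^sub>v (C *\<^sub>v x))" using GBC B R C x by (simp add: assoc_dim_vec)
      also have "\<dots> = G *\<^sub>v x" using CR GBC B C x by (simp add: assoc_dim_vec)
      finally have "(R * C) *\<^sub>v x = x" using inj x R C by auto
      then show "(R * C) *\<^sub>v x = 1\<^sub>m n *\<^sub>v x" using x by simp
    qed (use R C in auto)
    finally show ?thesis .
  qed
  show ?thesis using H GH HG by blast
qed

definition hcat :: "'a::zero mat \<Rightarrow> 'a mat \<Rightarrow> 'a mat" where
  "hcat X Y = four_block_mat X Y (0\<^sub>m 0 (dim_col X)) (0\<^sub>m 0 (dim_col Y))"
definition vcat :: "'a::zero mat \<Rightarrow> 'a mat \<Rightarrow> 'a mat" where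
  "vcat X Y = four_block_mat X (0\<^sub>m (dim_row X) 0) Y (0\<^sub>m (dim_row Y) 0)"
definition dsum :: "'a::zero mat \<Rightarrow> 'a mat \<Rightarrow> 'a mat" where
  "dsum X Y = four_block_mat X (0\<^sub>m (dim_row X) (dim_col Y)) (0\<^sub>m (dim_row Y) (dim_col X)) Y"

lemma hcat_carrier[simp]: "X \<in> carrier_mat n a \<Longrightarrow> Y \<in> carrier_mat n b \<Longrightarrow> hcat X Y \<in> carrier_mat n (a + b)"
  unfolding hcat_def using four_block_carrier_mat[of X n a "0\<^sub>m 0 b" 0 b] by auto
lemma vcat_carrier[simp]: "X \<in> carrier_mat a n \<Longrightarrow> Y \<in> carrier_mat b n \<Longrightarrow> vcat X Y \<in> carrier_mat (a + b) n"
  unfolding vcat_def using four_block_carrier_mat[of X a n "0\<^sub>m b 0" b 0] by auto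
lemma dsum_carrier[simp]: "X \<in> carrier_mat a c \<Longrightarrow> Y \<in> carrier_mat b d \<Longrightarrow> dsum X Y \<in> carrier_mat (a + b) (c + d)"
  unfolding dsum_def by auto

lemma triv_block: assumes A: "A \<in> carrier_mat n m" and "B \<in> carrier_mat n 0" "C \<in> carrier_mat 0 m" "D \<in> carrier_mat 0 0"
  shows "four_block_mat A B C D = A"
  by (rule eq_matI) (use assms in auto)

lemma zero_rows: "A \<in> carrier_mat 0 m \<Longrightarrow> A = 0\<^sub>m 0 m"
  by (rule eq_matI) auto
lemma zero_cols: "A \<in> carrier_mat n 0 \<Longrightarrow> A = 0\<^sub>m n 0"
  by (rule eq_matI) auto

lemma hcat_vcat: fixes X :: "'a::comm_ring_1 mat"
  assumes "X \<in> carrier_mat n a" "Y \<in> carrier_mat n b" "A \<in> carrier_mat a m" "B \<in> carrier_mat b m"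
  shows "hcat X Y * vcat A B = X * A + Y * B"
proof -
  have "hcat X Y * vcat A B = four_block_mat (X * A + Y * B) (X * 0\<^sub>m a 0 + Y * 0\<^sub>m b 0)
      (0\<^sub>m 0 a * A + 0\<^sub>m 0 b * B) (0\<^sub>m 0 a * 0\<^sub>m a 0 + 0\<^sub>m 0 b * 0\<^sub>m b 0)"
    unfolding hcat_def vcat_def carrier_matD[OF assms(1)] carrier_matD[OF assms(2)] carrier_matD[OF assms(3)] carrier_matD[OF assms(4)]
    by (rule mult_four_block_mat) (use assms in auto)
  also have "\<dots> = X * A + Y * B" using assms by (intro triv_block) auto
  finally show ?thesis .
qed

lemma hcat_dsum: fixes X :: "'a::comm_ring_1 mat"
  assumes "X \<in> carrier_mat n a" "Y \<in> carrier_mat n b" "A \<in> carrier_mat a c" "B \<in> carrier_mat b d"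
  shows "hcat X Y * dsum A B = hcat (X * A) (Y * B)"
proof -
  have "hcat X Y * dsum A B = four_block_mat (X * A + Y * 0\<^sub>m b c) (X * 0\<^sub>m a d + Y * B)
      (0\<^sub>m 0 a * A + 0\<^sub>m 0 b * 0\<^sub>m b c) (0\<^sub>m 0 a * 0\<^sub>m a d + 0\<^sub>m 0 b * B)"
    unfolding hcat_def dsum_def carrier_matD[OF assms(1)] carrier_matD[OF assms(2)] carrier_matD[OF assms(3)] carrier_matD[OF assms(4)]
    by (rule mult_four_block_mat) (use assms in auto)
  also have "\<dots> = hcat (X * A) (Y * B)" unfolding hcat_def using assms by (auto intro!: arg_cong2[where f="four_block_mat _ _"] zero_rows)
  finally show ?thesis .
qed

lemma dsum_vcat: fixes X :: "'a::comm_ring_1 mat"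
  assumes "A \<in> carrier_mat c a" "B \<in> carrier_mat d b" "X \<in> carrier_mat a n" "Y \<in> carrier_mat b n"
  shows "dsum A B * vcat X Y = vcat (A * X) (B * Y)"
proof -
  have "dsum A B * vcat X Y = four_block_mat (A * X + 0\<^sub>m c b * Y) (A * 0\<^sub>m a 0 + 0\<^sub>m c b * 0\<^sub>m b 0)
      (0\<^sub>m d a * X + B * Y) (0\<^sub>m d a * 0\<^sub>m a 0 + B * 0\<^sub>m b 0)"
    unfolding vcat_def dsum_def carrier_matD[OF assms(1)] carrier_matD[OF assms(2)] carrier_matD[OF assms(3)] carrier_matD[OF assms(4)]
    by (rule mult_four_block_mat) (use assms in auto)
  also have "\<dots> = vcat (A * X) (B * Y)" unfolding vcat_def using assms by (auto intro!: arg_cong2[where f="four_block_mat _ _"] zero_cols)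
  finally show ?thesis .
qed

lemma mult_hcat: fixes X :: "'a::comm_ring_1 mat"
  assumes "Z \<in> carrier_mat p n" "X \<in> carrier_mat n a" "Y \<in> carrier_mat n b"
  shows "Z * hcat X Y = hcat (Z * X) (Z * Y)"
proof -
  have "Z * hcat X Y = four_block_mat Z (0\<^sub>m p 0) (0\<^sub>m 0 n) (0\<^sub>m 0 0) * hcat X Y"
    using assms by (simp add: triv_block)
  also have "\<dots> = four_block_mat (Z * X + 0\<^sub>m p 0 * 0\<^sub>m 0 a) (Z * Y + 0\<^sub>m p 0 * 0\<^sub>m 0 b)
      (0\<^sub>m 0 n * X + 0\<^sub>m 0 0 * 0\<^sub>m 0 a) (0\<^sub>m 0 n * Y + 0\<^sub>m 0 0 * 0\<^sub>m 0 b)"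
    unfolding hcat_def carrier_matD[OF assms(2)] carrier_matD[OF assms(3)]
    by (rule mult_four_block_mat) (use assms in auto)
  also have "\<dots> = hcat (Z * X) (Z * Y)" unfolding hcat_def using assms by (auto intro!: arg_cong2[where f="four_block_mat _ _"] zero_rows)
  finally show ?thesis .
qed

lemma vcat_mult: fixes X :: "'a::comm_ring_1 mat"
  assumes "X \<in> carrier_mat a n" "Y \<in> carrier_mat b n" "Z \<in> carrier_mat n p"
  shows "vcat X Y * Z = vcat (X * Z) (Y * Z)"
proof -
  have "vcat X Y * Z = vcat X Y * four_block_mat Z (0\<^sub>m n 0) (0\<^sub>m 0 p) (0\<^sub>m 0 0)"
    using assms by (simp add: triv_block)
  also have "\<dots> = four_block_mat (X * Z + 0\<^sub>m a 0 * 0\<^sub>m 0 p) (X * 0\<^sub>m n 0 + 0\<^sub>m a 0 * 0\<^sub>m 0 0)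
      (Y * Z + 0\<^sub>m b 0 * 0\<^sub>m 0 p) (Y * 0\<^sub>m n 0 + 0\<^sub>m b 0 * 0\<^sub>m 0 0)"
    unfolding vcat_def carrier_matD[OF assms(1)] carrier_matD[OF assms(2)]
    by (rule mult_four_block_mat) (use assms in auto)
  also have "\<dots> = vcat (X * Z) (Y * Z)" unfolding vcat_def using assms by (auto intro!: arg_cong2[where f="four_block_mat _ _"] zero_cols)
  finally show ?thesis .
qed

lemma hcat_inj2: assumes "X \<in> carrier_mat n a" "Y \<in> carrier_mat n b" "X' \<in> carrier_mat n a" "Y' \<in> carrier_mat n b"
  and eq: "hcat X Y = hcat X' Y'"
  shows "Y = Y'"
proof (rule eq_matI)
  fix i j assume ij: "i < dim_row Y'" "j < dim_col Y'"
  have ij': "i < n" "j < b" using ij assms by auto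
  have 1: "hcat X Y $$ (i, a + j) = Y $$ (i,j)" unfolding hcat_def using assms ij' by simp
  have 2: "hcat X' Y' $$ (i, a + j) = Y' $$ (i,j)" unfolding hcat_def using assms ij' by simp
  show "Y $$ (i,j) = Y' $$ (i,j)" using 1 2 eq by simp
qed (use assms in auto)

lemma vcat_inj2: assumes "X \<in> carrier_mat a n" "Y \<in> carrier_mat b n" "X' \<in> carrier_mat a n" "Y' \<in> carrier_mat b n"
  and eq: "vcat X Y = vcat X' Y'"
  shows "Y = Y'"
proof (rule eq_matI)
  fix i j assume ij: "i < dim_row Y'" "j < dim_col Y'"
  have ij': "i < b" "j < n" using ij assms by auto
  have 1: "vcat X Y $$ (a + i, j) = Y $$ (i,j)" unfolding vcat_def using assms ij' by simp
  have 2: "vcat X' Y' $$ (a + i, j) = Y' $$ (i,j)" unfolding vcat_def using assms ij' by simp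
  show "Y $$ (i,j) = Y' $$ (i,j)" using 1 2 eq by simp
qed (use assms in auto)

lemma R_obj_simp: "R_obj s t P I (V,f,h) \<longleftrightarrow> is_rep s t V \<and> rep_hom s t P V f \<and> rep_hom s t V I h"
  by (simp add: R_obj_def)
lemma R_hom_simp: "R_hom s t P I (V,f,h) (W,f',h') g \<longleftrightarrow> R_obj s t P I (V,f,h) \<and> R_obj s t P I (W,f',h')
   \<and> rep_hom s t V W g \<and> comp_hom g f = f' \<and> comp_hom h' g = h"
  by (simp add: R_hom_def)
lemma dimv_pair[simp]: "dimv (d, a) = d" by (simp add: dimv_def)
lemma amap_pair[simp]: "amap (d, a) = a" by (simp add: amap_def)
lemma rep_homD: "rep_hom s t V W g \<Longrightarrow> g i \<in> carrier_mat (dimv W i) (dimv V i)"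
  "rep_hom s t V W g \<Longrightarrow> g (t al) * amap V al = amap W al * g (s al)"
  by (auto simp: rep_hom_def)
lemma is_repD: "is_rep s t V \<Longrightarrow> amap V al \<in> carrier_mat (dimv V (t al)) (dimv V (s al))"
  by (auto simp: is_rep_def)
lemma comp_homD: "comp_hom g f = f' \<Longrightarrow> f' i = g i * f i"
  by (auto simp: comp_hom_def)

lemma bij_iso:
  assumes Rh: "R_hom s t P I (V,f,h) (W,f',h') g" and su: "hom_surj V W g" and inj: "hom_inj V W g"
  shows "R_iso s t P I (V,f,h) (W,f',h') g"
proof -
  from Rh have oX: "R_obj s t P I (V,f,h)" and oY: "R_obj s t P I (W,f',h')" and rg: "rep_hom s t V W g"
    and gf: "comp_hom g f = f'" and hg: "comp_hom h' g = h" by (simp_all add: R_hom_simp)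
  from oX have iV: "is_rep s t V" and rf: "rep_hom s t P V f" and rh: "rep_hom s t V I h" by (simp_all add: R_obj_simp)
  from oY have iW: "is_rep s t W" and rf': "rep_hom s t P W f'" and rh': "rep_hom s t W I h'" by (simp_all add: R_obj_simp)
  note gc = rep_homD(1)[OF rg]
  have "\<forall>i. \<exists>H. H \<in> carrier_mat (dimv V i) (dimv W i) \<and> H * g i = 1\<^sub>m (dimv V i) \<and> g i * H = 1\<^sub>m (dimv W i)"
  proof
    fix i
    show "\<exists>H. H \<in> carrier_mat (dimv V i) (dimv W i) \<and> H * g i = 1\<^sub>m (dimv V i) \<and> g i * H = 1\<^sub>m (dimv W i)"
      by (rule inv_fact[OF gc]) (use su inj in \<open>auto simp: hom_surj_def hom_inj_def\<close>)
  qed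
  from choice[OF this] obtain H where H: "\<forall>i. H i \<in> carrier_mat (dimv V i) (dimv W i) \<and> H i * g i = 1\<^sub>m (dimv V i) \<and> g i * H i = 1\<^sub>m (dimv W i)"
    by blast
  have Hc: "H i \<in> carrier_mat (dimv V i) (dimv W i)" and HG: "H i * g i = 1\<^sub>m (dimv V i)" and GH: "g i * H i = 1\<^sub>m (dimv W i)" for i
    using H by auto
  have rH: "rep_hom s t W V H"
    unfolding rep_hom_def
  proof (intro conjI allI)
    fix i show "H i \<in> carrier_mat (dimv V i) (dimv W i)" by (rule Hc)
  next
    fix al
    note aV = is_repD[OF iV, of al] and aW = is_repD[OF iW, of al]
    note c = Hc[of "t al"] Hc[of "s al"] gc[of "t al"] gc[of "s al"] aV aW
    have "H (t al) * amap W al = H (t al) * amap W al * (g (s al) * H (s al))" using GH[of "s al"] c by simp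
    also have "\<dots> = H (t al) * (amap W al * g (s al)) * H (s al)" using c by (simp add: assoc_dim)
    also have "\<dots> = H (t al) * (g (t al) * amap V al) * H (s al)" using rep_homD(2)[OF rg, of al] by simp
    also have "\<dots> = (H (t al) * g (t al)) * amap V al * H (s al)" using c by (simp add: assoc_dim)
    also have "\<dots> = amap V al * H (s al)" using HG[of "t al"] c by simp
    finally show "H (t al) * amap W al = amap V al * H (s al)" .
  qed
  have Hf: "comp_hom H f' = f"
  proof -
    have "H i * f' i = f i" for i
    proof -
      have fc: "f i \<in> carrier_mat (dimv V i) (dimv P i)" by (rule rep_homD(1)[OF rf])
      have "H i * f' i = (H i * g i) * f i" using comp_homD[OF gf, of i] Hc[of i] gc[of i] fc by (simp add: assoc_dim)
      then show ?thesis using HG[of i] fc by simp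
    qed
    then show ?thesis by (simp add: comp_hom_def)
  qed
  have hH: "comp_hom h H = h'"
  proof -
    have "h i * H i = h' i" for i
    proof -
      have hc: "h' i \<in> carrier_mat (dimv I i) (dimv W i)" by (rule rep_homD(1)[OF rh'])
      have "h i * H i = h' i * (g i * H i)" using comp_homD[OF hg, of i] Hc[of i] gc[of i] hc by (simp add: assoc_dim)
      then show ?thesis using GH[of i] hc by simp
    qed
    then show ?thesis by (simp add: comp_hom_def)
  qed
  have RH: "R_hom s t P I (W,f',h') (V,f,h) H" using oX oY rH Hf hH by (simp add: R_hom_simp)
  have c1: "comp_hom H g = R_id (V,f,h)" using HG by (simp add: comp_hom_def R_id_def)
  have c2: "comp_hom g H = R_id (W,f',h')" using GH by (simp add: comp_hom_def R_id_def)
  show ?thesis unfolding R_iso_def using Rh RH c1 c2 by blast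
qed

lemma vec_eq_of_minus: fixes x y :: "'a::field vec"
  assumes "x \<in> carrier_vec n" "y \<in> carrier_vec n" "x - y = 0\<^sub>v n" shows "x = y"
proof (rule eq_vecI)
  fix i assume "i < dim_vec y" then have i: "i < n" using assms by simp
  have 1: "(x - y) $ i = 0" using assms(3) i by simp
  have 2: "(x - y) $ i = x $ i - y $ i" using assms(2) i by simp
  show "x $ i = y $ i" using 1 2 by simp
qed (use assms in auto)

lemma zero_mat_mult_vec: "(w :: 'a::comm_ring_1 vec) \<in> carrier_vec m \<Longrightarrow> 0\<^sub>m n m *\<^sub>v w = 0\<^sub>v n"
  by (rule eq_vecI) (auto simp: scalar_prod_def)

lemma hcat_vcat_d: fixes X :: "'a::comm_ring_1 mat"
  assumes "dim_row Y = dim_row X" "dim_row A = dim_col X" "dim_row B = dim_col Y" "dim_col B = dim_col A"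
  shows "hcat X Y * vcat A B = X * A + Y * B"
proof -
  have "X \<in> carrier_mat (dim_row X) (dim_col X)" "Y \<in> carrier_mat (dim_row X) (dim_col Y)"
    "A \<in> carrier_mat (dim_col X) (dim_col A)" "B \<in> carrier_mat (dim_col Y) (dim_col A)"
    using assms by (auto intro!: carrier_matI)
  then show ?thesis by (rule hcat_vcat)
qed

lemma hcat_dsum_d: fixes X :: "'a::comm_ring_1 mat"
  assumes "dim_row Y = dim_row X" "dim_row A = dim_col X" "dim_row B = dim_col Y"
  shows "hcat X Y * dsum A B = hcat (X * A) (Y * B)"
proof -
  have "X \<in> carrier_mat (dim_row X) (dim_col X)" "Y \<in> carrier_mat (dim_row X) (dim_col Y)"
    "A \<in> carrier_mat (dim_col X) (dim_col A)" "B \<in> carrier_mat (dim_col Y) (dim_col B)"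
    using assms by (auto intro!: carrier_matI)
  then show ?thesis by (rule hcat_dsum)
qed

lemma dsum_vcat_d: fixes X :: "'a::comm_ring_1 mat"
  assumes "dim_row X = dim_col A" "dim_row Y = dim_col B" "dim_col Y = dim_col X"
  shows "dsum A B * vcat X Y = vcat (A * X) (B * Y)"
proof -
  have "A \<in> carrier_mat (dim_row A) (dim_col A)" "B \<in> carrier_mat (dim_row B) (dim_col B)"
    "X \<in> carrier_mat (dim_col A) (dim_col X)" "Y \<in> carrier_mat (dim_col B) (dim_col X)"
    using assms by (auto intro!: carrier_matI)
  then show ?thesis by (rule dsum_vcat)
qed

lemma mult_hcat_d: fixes X :: "'a::comm_ring_1 mat"
  assumes "dim_row X = dim_col Z" "dim_row Y = dim_col Z"
  shows "Z * hcat X Y = hcat (Z * X) (Z * Y)"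
proof -
  have "Z \<in> carrier_mat (dim_row Z) (dim_col Z)" "X \<in> carrier_mat (dim_col Z) (dim_col X)"
    "Y \<in> carrier_mat (dim_col Z) (dim_col Y)"
    using assms by (auto intro!: carrier_matI)
  then show ?thesis by (rule mult_hcat)
qed

lemma vcat_mult_d: fixes X :: "'a::comm_ring_1 mat"
  assumes "dim_col X = dim_row Z" "dim_col Y = dim_row Z"
  shows "vcat X Y * Z = vcat (X * Z) (Y * Z)"
proof -
  have "X \<in> carrier_mat (dim_row X) (dim_row Z)" "Y \<in> carrier_mat (dim_row Y) (dim_row Z)"
    "Z \<in> carrier_mat (dim_row Z) (dim_col Z)"
    using assms by (auto intro!: carrier_matI)
  then show ?thesis by (rule vcat_mult)
qed

lemma mono_inj:
  fixes g :: "'v \<Rightarrow> complex mat"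
  assumes Rm: "R_mono s t P I (W,f',h') (V,f,h) g" and iP: "is_rep s t P" and iI: "is_rep s t I"
  shows "hom_inj W V g"
proof -
  from Rm have Rh: "R_hom s t P I (W,f',h') (V,f,h) g" by (simp add: R_mono_def)
  from Rh have oY: "R_obj s t P I (W,f',h')" and oX: "R_obj s t P I (V,f,h)" and rg: "rep_hom s t W V g"
    and gf: "comp_hom g f' = f" and hg: "comp_hom h g = h'" by (simp_all add: R_hom_simp)
  from oX have iV: "is_rep s t V" and rf: "rep_hom s t P V f" and rh: "rep_hom s t V I h" by (simp_all add: R_obj_simp)
  from oY have iW: "is_rep s t W" and rf': "rep_hom s t P W f'" and rh': "rep_hom s t W I h'" by (simp_all add: R_obj_simp)
  note gc = rep_homD(1)[OF rg]
  have "\<forall>i. \<exists>k K L. K \<in> carrier_mat (dimv W i) k \<and> L \<in> carrier_mat k (dimv W i) \<and> g i * K = 0\<^sub>m (dimv V i) k \<and> L * K = 1\<^sub>m k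
     \<and> (\<forall>p M. M \<in> carrier_mat (dimv W i) p \<longrightarrow> g i * M = 0\<^sub>m (dimv V i) p \<longrightarrow> K * (L * M) = M)
     \<and> (\<forall>x \<in> carrier_vec (dimv W i). g i *\<^sub>v x = 0\<^sub>v (dimv V i) \<longrightarrow> K *\<^sub>v (L *\<^sub>v x) = x)"
    using ker_fact[OF gc] by blast
  then have "\<exists>k. \<forall>i. \<exists>K L. K \<in> carrier_mat (dimv W i) (k i) \<and> L \<in> carrier_mat (k i) (dimv W i) \<and> g i * K = 0\<^sub>m (dimv V i) (k i) \<and> L * K = 1\<^sub>m (k i)
     \<and> (\<forall>p M. M \<in> carrier_mat (dimv W i) p \<longrightarrow> g i * M = 0\<^sub>m (dimv V i) p \<longrightarrow> K * (L * M) = M)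
     \<and> (\<forall>x \<in> carrier_vec (dimv W i). g i *\<^sub>v x = 0\<^sub>v (dimv V i) \<longrightarrow> K *\<^sub>v (L *\<^sub>v x) = x)"
    by (rule choice)
  then obtain k where "\<forall>i. \<exists>K L. K \<in> carrier_mat (dimv W i) (k i) \<and> L \<in> carrier_mat (k i) (dimv W i) \<and> g i * K = 0\<^sub>m (dimv V i) (k i) \<and> L * K = 1\<^sub>m (k i)
     \<and> (\<forall>p M. M \<in> carrier_mat (dimv W i) p \<longrightarrow> g i * M = 0\<^sub>m (dimv V i) p \<longrightarrow> K * (L * M) = M)
     \<and> (\<forall>x \<in> carrier_vec (dimv W i). g i *\<^sub>v x = 0\<^sub>v (dimv V i) \<longrightarrow> K *\<^sub>v (L *\<^sub>v x) = x)" by blast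
  then have "\<exists>K. \<forall>i. \<exists>L. K i \<in> carrier_mat (dimv W i) (k i) \<and> L \<in> carrier_mat (k i) (dimv W i) \<and> g i * K i = 0\<^sub>m (dimv V i) (k i) \<and> L * K i = 1\<^sub>m (k i)
     \<and> (\<forall>p M. M \<in> carrier_mat (dimv W i) p \<longrightarrow> g i * M = 0\<^sub>m (dimv V i) p \<longrightarrow> K i * (L * M) = M)
     \<and> (\<forall>x \<in> carrier_vec (dimv W i). g i *\<^sub>v x = 0\<^sub>v (dimv V i) \<longrightarrow> K i *\<^sub>v (L *\<^sub>v x) = x)"
    by (rule choice)
  then obtain K where "\<forall>i. \<exists>L. K i \<in> carrier_mat (dimv W i) (k i) \<and> L \<in> carrier_mat (k i) (dimv W i) \<and> g i * K i = 0\<^sub>m (dimv V i) (k i) \<and> L * K i = 1\<^sub>m (k i)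
     \<and> (\<forall>p M. M \<in> carrier_mat (dimv W i) p \<longrightarrow> g i * M = 0\<^sub>m (dimv V i) p \<longrightarrow> K i * (L * M) = M)
     \<and> (\<forall>x \<in> carrier_vec (dimv W i). g i *\<^sub>v x = 0\<^sub>v (dimv V i) \<longrightarrow> K i *\<^sub>v (L *\<^sub>v x) = x)" by blast
  then have "\<exists>L. \<forall>i. K i \<in> carrier_mat (dimv W i) (k i) \<and> L i \<in> carrier_mat (k i) (dimv W i) \<and> g i * K i = 0\<^sub>m (dimv V i) (k i) \<and> L i * K i = 1\<^sub>m (k i)
     \<and> (\<forall>p M. M \<in> carrier_mat (dimv W i) p \<longrightarrow> g i * M = 0\<^sub>m (dimv V i) p \<longrightarrow> K i * (L i * M) = M)
     \<and> (\<forall>x \<in> carrier_vec (dimv W i). g i *\<^sub>v x = 0\<^sub>v (dimv V i) \<longrightarrow> K i *\<^sub>v (L i *\<^sub>v x) = x)"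
    by (rule choice)
  then obtain L where KL: "\<forall>i. K i \<in> carrier_mat (dimv W i) (k i) \<and> L i \<in> carrier_mat (k i) (dimv W i) \<and> g i * K i = 0\<^sub>m (dimv V i) (k i) \<and> L i * K i = 1\<^sub>m (k i)
     \<and> (\<forall>p M. M \<in> carrier_mat (dimv W i) p \<longrightarrow> g i * M = 0\<^sub>m (dimv V i) p \<longrightarrow> K i * (L i * M) = M)
     \<and> (\<forall>x \<in> carrier_vec (dimv W i). g i *\<^sub>v x = 0\<^sub>v (dimv V i) \<longrightarrow> K i *\<^sub>v (L i *\<^sub>v x) = x)" by blast
  have Kc: "K i \<in> carrier_mat (dimv W i) (k i)" and Lc: "L i \<in> carrier_mat (k i) (dimv W i)"
    and gK: "g i * K i = 0\<^sub>m (dimv V i) (k i)"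
    and Kmat: "\<And>p M. M \<in> carrier_mat (dimv W i) p \<Longrightarrow> g i * M = 0\<^sub>m (dimv V i) p \<Longrightarrow> K i * (L i * M) = M"
    and Kvec: "\<And>x. x \<in> carrier_vec (dimv W i) \<Longrightarrow> g i *\<^sub>v x = 0\<^sub>v (dimv V i) \<Longrightarrow> K i *\<^sub>v (L i *\<^sub>v x) = x"
    for i using KL by auto
  define aK where "aK al = L (t al) * amap W al * K (s al)" for al
  have aKc: "aK al \<in> carrier_mat (k (t al)) (k (s al))" for al
    unfolding aK_def by (rule mult_carrier_mat[OF mult_carrier_mat[OF Lc is_repD[OF iW]] Kc])
  have KaK: "K (t al) * aK al = amap W al * K (s al)" for al
  proof -
    note c = Kc[of "t al"] Kc[of "s al"] Lc[of "t al"] gc[of "t al"] gc[of "s al"] is_repD[OF iW, of al] is_repD[OF iV, of al]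
    have "g (t al) * (amap W al * K (s al)) = (g (t al) * amap W al) * K (s al)" using c by (simp add: assoc_dim)
    also have "\<dots> = amap V al * (g (s al) * K (s al))" using rep_homD(2)[OF rg, of al] c by (simp add: assoc_dim)
    also have "\<dots> = 0\<^sub>m (dimv V (t al)) (k (s al))" using gK[of "s al"] c by simp
    finally have "K (t al) * (L (t al) * (amap W al * K (s al))) = amap W al * K (s al)"
      using c by (intro Kmat) auto
    then show ?thesis unfolding aK_def using c by (simp add: assoc_dim)
  qed
  define Zr :: "('v, 'a) qrep" where "Zr = (\<lambda>i. dimv W i + k i, \<lambda>al. dsum (amap W al) (aK al))"
  define fZ where "fZ i = vcat (f' i) (0\<^sub>m (k i) (dimv P i))" for i
  define hZ where "hZ i = hcat (h' i) (0\<^sub>m (dimv I i) (k i))" for i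
  define u where "u i = hcat (1\<^sub>m (dimv W i)) (K i)" for i
  define v :: "'v \<Rightarrow> complex mat" where "v i = hcat (1\<^sub>m (dimv W i)) (0\<^sub>m (dimv W i) (k i))" for i
  note f'c = rep_homD(1)[OF rf'] and h'c = rep_homD(1)[OF rh']
  have iZ: "is_rep s t Zr" unfolding is_rep_def Zr_def using is_repD[OF iW] aKc by auto
  have rfZ: "rep_hom s t P Zr fZ"
    unfolding rep_hom_def
  proof (intro conjI allI)
    fix i show "fZ i \<in> carrier_mat (dimv Zr i) (dimv P i)" unfolding fZ_def Zr_def using f'c[of i] by simp
  next
    fix al
    note c = f'c[of "t al"] f'c[of "s al"] is_repD[OF iW, of al] aKc[of al]
    have "fZ (t al) * amap P al = vcat (f' (t al) * amap P al) (0\<^sub>m (k (t al)) (dimv P (s al)))"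
      unfolding fZ_def using c is_repD[OF iP, of al] by (simp add: vcat_mult_d)
    also have "\<dots> = vcat (amap W al * f' (s al)) (aK al * 0\<^sub>m (k (s al)) (dimv P (s al)))"
      using rep_homD(2)[OF rf', of al] c by simp
    also have "\<dots> = amap Zr al * fZ (s al)" unfolding Zr_def fZ_def using c by (simp add: dsum_vcat_d)
    finally show "fZ (t al) * amap P al = amap Zr al * fZ (s al)" .
  qed
  have rhZ: "rep_hom s t Zr I hZ"
    unfolding rep_hom_def
  proof (intro conjI allI)
    fix i show "hZ i \<in> carrier_mat (dimv I i) (dimv Zr i)" unfolding hZ_def Zr_def using h'c[of i] by simp
  next
    fix al
    note c = h'c[of "t al"] h'c[of "s al"] is_repD[OF iW, of al] aKc[of al] is_repD[OF iI, of al]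
    have "hZ (t al) * amap Zr al = hcat (h' (t al) * amap W al) (0\<^sub>m (dimv I (t al)) (k (t al)) * aK al)"
      unfolding hZ_def Zr_def using c by (simp add: hcat_dsum_d)
    also have "\<dots> = hcat (amap I al * h' (s al)) (amap I al * 0\<^sub>m (dimv I (s al)) (k (s al)))"
      using rep_homD(2)[OF rh', of al] c by simp
    also have "\<dots> = amap I al * hZ (s al)" unfolding hZ_def using c by (simp add: mult_hcat_d)
    finally show "hZ (t al) * amap Zr al = amap I al * hZ (s al)" .
  qed
  have oZ: "R_obj s t P I (Zr, fZ, hZ)" using iZ rfZ rhZ by (simp add: R_obj_simp)
  have ru: "rep_hom s t Zr W u"
    unfolding rep_hom_def
  proof (intro conjI allI)
    fix i show "u i \<in> carrier_mat (dimv W i) (dimv Zr i)" unfolding u_def Zr_def using Kc[of i] by simp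
  next
    fix al
    note c = Kc[of "t al"] Kc[of "s al"] is_repD[OF iW, of al] aKc[of al]
    have "u (t al) * amap Zr al = hcat (1\<^sub>m (dimv W (t al)) * amap W al) (K (t al) * aK al)"
      unfolding u_def Zr_def using c by (simp add: hcat_dsum_d)
    also have "\<dots> = hcat (amap W al * 1\<^sub>m (dimv W (s al))) (amap W al * K (s al))" using KaK[of al] c by simp
    also have "\<dots> = amap W al * u (s al)" unfolding u_def using c by (simp add: mult_hcat_d)
    finally show "u (t al) * amap Zr al = amap W al * u (s al)" .
  qed
  have rv: "rep_hom s t Zr W v"
    unfolding rep_hom_def
  proof (intro conjI allI)
    fix i show "v i \<in> carrier_mat (dimv W i) (dimv Zr i)" unfolding v_def Zr_def by simp
  next
    fix al
    note c = is_repD[OF iW, of al] aKc[of al]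
    have "v (t al) * amap Zr al = hcat (1\<^sub>m (dimv W (t al)) * amap W al) (0\<^sub>m (dimv W (t al)) (k (t al)) * aK al)"
      unfolding v_def Zr_def using c by (simp add: hcat_dsum_d)
    also have "\<dots> = hcat (amap W al * 1\<^sub>m (dimv W (s al))) (amap W al * 0\<^sub>m (dimv W (s al)) (k (s al)))" using c by simp
    also have "\<dots> = amap W al * v (s al)" unfolding v_def using c by (simp add: mult_hcat_d)
    finally show "v (t al) * amap Zr al = amap W al * v (s al)" .
  qed
  have uf: "comp_hom u fZ = f'"
  proof -
    have "u i * fZ i = f' i" for i
    proof -
      have "u i * fZ i = 1\<^sub>m (dimv W i) * f' i + K i * 0\<^sub>m (k i) (dimv P i)"
        unfolding u_def fZ_def using Kc[of i] f'c[of i] by (simp add: hcat_vcat_d)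
      then show ?thesis using Kc[of i] f'c[of i] by simp
    qed
    then show ?thesis by (simp add: comp_hom_def)
  qed
  have vf: "comp_hom v fZ = f'"
  proof -
    have "v i * fZ i = f' i" for i
    proof -
      have "v i * fZ i = 1\<^sub>m (dimv W i) * f' i + 0\<^sub>m (dimv W i) (k i) * 0\<^sub>m (k i) (dimv P i)"
        unfolding v_def fZ_def using f'c[of i] by (simp add: hcat_vcat_d)
      then show ?thesis using f'c[of i] by simp
    qed
    then show ?thesis by (simp add: comp_hom_def)
  qed
  have h'K: "h' i * K i = 0\<^sub>m (dimv I i) (k i)" for i
  proof -
    have hc: "h i \<in> carrier_mat (dimv I i) (dimv V i)" by (rule rep_homD(1)[OF rh])
    have "h' i * K i = h i * (g i * K i)" using comp_homD[OF hg, of i] hc gc[of i] Kc[of i] by (simp add: assoc_dim)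
    then show ?thesis using gK[of i] hc by simp
  qed
  have hu: "comp_hom h' u = hZ"
  proof -
    have "h' i * u i = hZ i" for i
    proof -
      have "h' i * u i = hcat (h' i * 1\<^sub>m (dimv W i)) (h' i * K i)"
        unfolding u_def using Kc[of i] h'c[of i] by (simp add: mult_hcat_d)
      then show ?thesis unfolding hZ_def using h'K[of i] h'c[of i] by simp
    qed
    then show ?thesis by (simp add: comp_hom_def)
  qed
  have hv: "comp_hom h' v = hZ"
  proof -
    have "h' i * v i = hZ i" for i
    proof -
      have "h' i * v i = hcat (h' i * 1\<^sub>m (dimv W i)) (h' i * 0\<^sub>m (dimv W i) (k i))"
        unfolding v_def using h'c[of i] by (simp add: mult_hcat_d)
      then show ?thesis unfolding hZ_def using h'c[of i] by simp
    qed
    then show ?thesis by (simp add: comp_hom_def)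
  qed
  have gu: "comp_hom g u = comp_hom g v"
  proof -
    have "g i * u i = g i * v i" for i
    proof -
      have "g i * u i = hcat (g i * 1\<^sub>m (dimv W i)) (g i * K i)"
        unfolding u_def using Kc[of i] gc[of i] by (simp add: mult_hcat_d)
      also have "\<dots> = hcat (g i * 1\<^sub>m (dimv W i)) (g i * 0\<^sub>m (dimv W i) (k i))" using gK[of i] gc[of i] by simp
      also have "\<dots> = g i * v i" unfolding v_def using gc[of i] by (simp add: mult_hcat_d)
      finally show ?thesis .
    qed
    then show ?thesis by (simp add: comp_hom_def)
  qed
  have Ru: "R_hom s t P I (Zr, fZ, hZ) (W, f', h') u" using oZ oY ru uf hu by (simp add: R_hom_simp)
  have Rv: "R_hom s t P I (Zr, fZ, hZ) (W, f', h') v" using oZ oY rv vf hv by (simp add: R_hom_simp)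
  from Rm have "\<forall>Z u v. R_hom s t P I Z (W,f',h') u \<and> R_hom s t P I Z (W,f',h') v \<and> comp_hom g u = comp_hom g v \<longrightarrow> u = v"
    unfolding R_mono_def by blast
  then have uv: "u = v" using Ru Rv gu by blast
  have K0: "K i = 0\<^sub>m (dimv W i) (k i)" for i
  proof -
    have "u i = v i" using uv by simp
    then show ?thesis unfolding u_def v_def using Kc[of i] by (intro hcat_inj2[of "1\<^sub>m (dimv W i)" "dimv W i" "dimv W i" "K i" "k i"]) auto
  qed
  show ?thesis unfolding hom_inj_def
  proof (intro allI ballI impI)
    fix i x y assume x: "x \<in> carrier_vec (dimv W i)" and y: "y \<in> carrier_vec (dimv W i)" and eq: "g i *\<^sub>v x = g i *\<^sub>v y"
    have "g i *\<^sub>v (x - y) = g i *\<^sub>v x - g i *\<^sub>v y" by (rule mult_minus_distrib_mat_vec[OF gc x y])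
    also have "\<dots> = 0\<^sub>v (dimv V i)" using eq gc[of i] y by simp
    finally have "K i *\<^sub>v (L i *\<^sub>v (x - y)) = x - y" using x y by (intro Kvec) auto
    then have "x - y = 0\<^sub>m (dimv W i) (k i) *\<^sub>v (L i *\<^sub>v (x - y))" using K0[of i] by simp
    also have "\<dots> = 0\<^sub>v (dimv W i)" by (rule zero_mat_mult_vec) (use Lc[of i] x y in auto)
    finally have "x - y = 0\<^sub>v (dimv W i)" .
    then show "x = y" using x y by (rule vec_eq_of_minus[rotated 2])
  qed
qed

lemma epi_surj:
  fixes g :: "'v \<Rightarrow> complex mat"
  assumes Re: "R_epi s t P I (V,f,h) (W,f'',h'') g" and iP: "is_rep s t P" and iI: "is_rep s t I"
  shows "hom_surj V W g"
proof -
  from Re have Rh: "R_hom s t P I (V,f,h) (W,f'',h'') g" by (simp add: R_epi_def)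
  from Rh have oX: "R_obj s t P I (V,f,h)" and oY: "R_obj s t P I (W,f'',h'')" and rg: "rep_hom s t V W g"
    and gf: "comp_hom g f = f''" and hg: "comp_hom h'' g = h" by (simp_all add: R_hom_simp)
  from oX have iV: "is_rep s t V" and rf: "rep_hom s t P V f" and rh: "rep_hom s t V I h" by (simp_all add: R_obj_simp)
  from oY have iW: "is_rep s t W" and rf'': "rep_hom s t P W f''" and rh'': "rep_hom s t W I h''" by (simp_all add: R_obj_simp)
  note gc = rep_homD(1)[OF rg]
  have "\<forall>i. \<exists>q Q R'. Q \<in> carrier_mat q (dimv W i) \<and> R' \<in> carrier_mat (dimv W i) q \<and> Q * g i = 0\<^sub>m q (dimv V i) \<and> Q * R' = 1\<^sub>m q
     \<and> (\<forall>p M. M \<in> carrier_mat p (dimv W i) \<longrightarrow> M * g i = 0\<^sub>m p (dimv V i) \<longrightarrow> (M * R') * Q = M)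
     \<and> (\<forall>y \<in> carrier_vec (dimv W i). Q *\<^sub>v y = 0\<^sub>v q \<longrightarrow> (\<exists>x \<in> carrier_vec (dimv V i). g i *\<^sub>v x = y))"
    using coker_fact[OF gc] by blast
  then have "\<exists>q. \<forall>i. \<exists>Q R'. Q \<in> carrier_mat (q i) (dimv W i) \<and> R' \<in> carrier_mat (dimv W i) (q i) \<and> Q * g i = 0\<^sub>m (q i) (dimv V i) \<and> Q * R' = 1\<^sub>m (q i)
     \<and> (\<forall>p M. M \<in> carrier_mat p (dimv W i) \<longrightarrow> M * g i = 0\<^sub>m p (dimv V i) \<longrightarrow> (M * R') * Q = M)
     \<and> (\<forall>y \<in> carrier_vec (dimv W i). Q *\<^sub>v y = 0\<^sub>v (q i) \<longrightarrow> (\<exists>x \<in> carrier_vec (dimv V i). g i *\<^sub>v x = y))"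
    by (rule choice)
  then obtain q where "\<forall>i. \<exists>Q R'. Q \<in> carrier_mat (q i) (dimv W i) \<and> R' \<in> carrier_mat (dimv W i) (q i) \<and> Q * g i = 0\<^sub>m (q i) (dimv V i) \<and> Q * R' = 1\<^sub>m (q i)
     \<and> (\<forall>p M. M \<in> carrier_mat p (dimv W i) \<longrightarrow> M * g i = 0\<^sub>m p (dimv V i) \<longrightarrow> (M * R') * Q = M)
     \<and> (\<forall>y \<in> carrier_vec (dimv W i). Q *\<^sub>v y = 0\<^sub>v (q i) \<longrightarrow> (\<exists>x \<in> carrier_vec (dimv V i). g i *\<^sub>v x = y))" by blast
  then have "\<exists>Q. \<forall>i. \<exists>R'. Q i \<in> carrier_mat (q i) (dimv W i) \<and> R' \<in> carrier_mat (dimv W i) (q i) \<and> Q i * g i = 0\<^sub>m (q i) (dimv V i) \<and> Q i * R' = 1\<^sub>m (q i)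
     \<and> (\<forall>p M. M \<in> carrier_mat p (dimv W i) \<longrightarrow> M * g i = 0\<^sub>m p (dimv V i) \<longrightarrow> (M * R') * Q i = M)
     \<and> (\<forall>y \<in> carrier_vec (dimv W i). Q i *\<^sub>v y = 0\<^sub>v (q i) \<longrightarrow> (\<exists>x \<in> carrier_vec (dimv V i). g i *\<^sub>v x = y))"
    by (rule choice)
  then obtain Q where "\<forall>i. \<exists>R'. Q i \<in> carrier_mat (q i) (dimv W i) \<and> R' \<in> carrier_mat (dimv W i) (q i) \<and> Q i * g i = 0\<^sub>m (q i) (dimv V i) \<and> Q i * R' = 1\<^sub>m (q i)
     \<and> (\<forall>p M. M \<in> carrier_mat p (dimv W i) \<longrightarrow> M * g i = 0\<^sub>m p (dimv V i) \<longrightarrow> (M * R') * Q i = M)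
     \<and> (\<forall>y \<in> carrier_vec (dimv W i). Q i *\<^sub>v y = 0\<^sub>v (q i) \<longrightarrow> (\<exists>x \<in> carrier_vec (dimv V i). g i *\<^sub>v x = y))" by blast
  then have "\<exists>R'. \<forall>i. Q i \<in> carrier_mat (q i) (dimv W i) \<and> R' i \<in> carrier_mat (dimv W i) (q i) \<and> Q i * g i = 0\<^sub>m (q i) (dimv V i) \<and> Q i * R' i = 1\<^sub>m (q i)
     \<and> (\<forall>p M. M \<in> carrier_mat p (dimv W i) \<longrightarrow> M * g i = 0\<^sub>m p (dimv V i) \<longrightarrow> (M * R' i) * Q i = M)
     \<and> (\<forall>y \<in> carrier_vec (dimv W i). Q i *\<^sub>v y = 0\<^sub>v (q i) \<longrightarrow> (\<exists>x \<in> carrier_vec (dimv V i). g i *\<^sub>v x = y))"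
    by (rule choice)
  then obtain R' where QR: "\<forall>i. Q i \<in> carrier_mat (q i) (dimv W i) \<and> R' i \<in> carrier_mat (dimv W i) (q i) \<and> Q i * g i = 0\<^sub>m (q i) (dimv V i) \<and> Q i * R' i = 1\<^sub>m (q i)
     \<and> (\<forall>p M. M \<in> carrier_mat p (dimv W i) \<longrightarrow> M * g i = 0\<^sub>m p (dimv V i) \<longrightarrow> (M * R' i) * Q i = M)
     \<and> (\<forall>y \<in> carrier_vec (dimv W i). Q i *\<^sub>v y = 0\<^sub>v (q i) \<longrightarrow> (\<exists>x \<in> carrier_vec (dimv V i). g i *\<^sub>v x = y))" by blast
  have Qc: "Q i \<in> carrier_mat (q i) (dimv W i)" and R'c: "R' i \<in> carrier_mat (dimv W i) (q i)"
    and Qg: "Q i * g i = 0\<^sub>m (q i) (dimv V i)"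
    and Qmat: "\<And>p M. M \<in> carrier_mat p (dimv W i) \<Longrightarrow> M * g i = 0\<^sub>m p (dimv V i) \<Longrightarrow> (M * R' i) * Q i = M"
    and Qvec: "\<And>y. y \<in> carrier_vec (dimv W i) \<Longrightarrow> Q i *\<^sub>v y = 0\<^sub>v (q i) \<Longrightarrow> (\<exists>x \<in> carrier_vec (dimv V i). g i *\<^sub>v x = y)"
    for i using QR by auto
  define aQ where "aQ al = Q (t al) * amap W al * R' (s al)" for al
  have aQc: "aQ al \<in> carrier_mat (q (t al)) (q (s al))" for al
    unfolding aQ_def by (rule mult_carrier_mat[OF mult_carrier_mat[OF Qc is_repD[OF iW]] R'c])
  have QaQ: "aQ al * Q (s al) = Q (t al) * amap W al" for al
  proof -
    note c = Qc[of "t al"] Qc[of "s al"] R'c[of "s al"] gc[of "t al"] gc[of "s al"] is_repD[OF iW, of al] is_repD[OF iV, of al]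
    have "(Q (t al) * amap W al) * g (s al) = Q (t al) * (amap W al * g (s al))" using c by (simp add: assoc_dim)
    also have "\<dots> = (Q (t al) * g (t al)) * amap V al" using rep_homD(2)[OF rg, of al] c by (simp add: assoc_dim)
    also have "\<dots> = 0\<^sub>m (q (t al)) (dimv V (s al))" using Qg[of "t al"] c by simp
    finally have "((Q (t al) * amap W al) * R' (s al)) * Q (s al) = Q (t al) * amap W al"
      using c by (intro Qmat) auto
    then show ?thesis unfolding aQ_def .
  qed
  define Zr :: "('v, 'a) qrep" where "Zr = (\<lambda>i. dimv W i + q i, \<lambda>al. dsum (amap W al) (aQ al))"
  define fZ where "fZ i = vcat (f'' i) (0\<^sub>m (q i) (dimv P i))" for i
  define hZ where "hZ i = hcat (h'' i) (0\<^sub>m (dimv I i) (q i))" for i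
  define u :: "'v \<Rightarrow> complex mat" where "u i = vcat (1\<^sub>m (dimv W i)) (Q i)" for i
  define v :: "'v \<Rightarrow> complex mat" where "v i = vcat (1\<^sub>m (dimv W i)) (0\<^sub>m (q i) (dimv W i))" for i
  note f'c = rep_homD(1)[OF rf''] and h'c = rep_homD(1)[OF rh'']
  have iZ: "is_rep s t Zr" unfolding is_rep_def Zr_def using is_repD[OF iW] aQc by auto
  have rfZ: "rep_hom s t P Zr fZ"
    unfolding rep_hom_def
  proof (intro conjI allI)
    fix i show "fZ i \<in> carrier_mat (dimv Zr i) (dimv P i)" unfolding fZ_def Zr_def using f'c[of i] by simp
  next
    fix al
    note c = f'c[of "t al"] f'c[of "s al"] is_repD[OF iW, of al] aQc[of al]
    have "fZ (t al) * amap P al = vcat (f'' (t al) * amap P al) (0\<^sub>m (q (t al)) (dimv P (s al)))"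
      unfolding fZ_def using c is_repD[OF iP, of al] by (simp add: vcat_mult_d)
    also have "\<dots> = vcat (amap W al * f'' (s al)) (aQ al * 0\<^sub>m (q (s al)) (dimv P (s al)))"
      using rep_homD(2)[OF rf'', of al] c by simp
    also have "\<dots> = amap Zr al * fZ (s al)" unfolding Zr_def fZ_def using c by (simp add: dsum_vcat_d)
    finally show "fZ (t al) * amap P al = amap Zr al * fZ (s al)" .
  qed
  have rhZ: "rep_hom s t Zr I hZ"
    unfolding rep_hom_def
  proof (intro conjI allI)
    fix i show "hZ i \<in> carrier_mat (dimv I i) (dimv Zr i)" unfolding hZ_def Zr_def using h'c[of i] by simp
  next
    fix al
    note c = h'c[of "t al"] h'c[of "s al"] is_repD[OF iW, of al] aQc[of al] is_repD[OF iI, of al]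
    have "hZ (t al) * amap Zr al = hcat (h'' (t al) * amap W al) (0\<^sub>m (dimv I (t al)) (q (t al)) * aQ al)"
      unfolding hZ_def Zr_def using c by (simp add: hcat_dsum_d)
    also have "\<dots> = hcat (amap I al * h'' (s al)) (amap I al * 0\<^sub>m (dimv I (s al)) (q (s al)))"
      using rep_homD(2)[OF rh'', of al] c by simp
    also have "\<dots> = amap I al * hZ (s al)" unfolding hZ_def using c by (simp add: mult_hcat_d)
    finally show "hZ (t al) * amap Zr al = amap I al * hZ (s al)" .
  qed
  have oZ: "R_obj s t P I (Zr, fZ, hZ)" using iZ rfZ rhZ by (simp add: R_obj_simp)
  have ru: "rep_hom s t W Zr u"
    unfolding rep_hom_def
  proof (intro conjI allI)
    fix i show "u i \<in> carrier_mat (dimv Zr i) (dimv W i)" unfolding u_def Zr_def using Qc[of i] by simp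
  next
    fix al
    note c = Qc[of "t al"] Qc[of "s al"] is_repD[OF iW, of al] aQc[of al]
    have "u (t al) * amap W al = vcat (1\<^sub>m (dimv W (t al)) * amap W al) (Q (t al) * amap W al)"
      unfolding u_def using c by (simp add: vcat_mult_d)
    also have "\<dots> = vcat (amap W al * 1\<^sub>m (dimv W (s al))) (aQ al * Q (s al))" using QaQ[of al] c by simp
    also have "\<dots> = amap Zr al * u (s al)" unfolding u_def Zr_def using c by (simp add: dsum_vcat_d)
    finally show "u (t al) * amap W al = amap Zr al * u (s al)" .
  qed
  have rv: "rep_hom s t W Zr v"
    unfolding rep_hom_def
  proof (intro conjI allI)
    fix i show "v i \<in> carrier_mat (dimv Zr i) (dimv W i)" unfolding v_def Zr_def by simp
  next
    fix al
    note c = is_repD[OF iW, of al] aQc[of al]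
    have "v (t al) * amap W al = vcat (1\<^sub>m (dimv W (t al)) * amap W al) (0\<^sub>m (q (t al)) (dimv W (t al)) * amap W al)"
      unfolding v_def using c by (simp add: vcat_mult_d)
    also have "\<dots> = vcat (amap W al * 1\<^sub>m (dimv W (s al))) (aQ al * 0\<^sub>m (q (s al)) (dimv W (s al)))" using c by simp
    also have "\<dots> = amap Zr al * v (s al)" unfolding v_def Zr_def using c by (simp add: dsum_vcat_d)
    finally show "v (t al) * amap W al = amap Zr al * v (s al)" .
  qed
  have Qf: "Q i * f'' i = 0\<^sub>m (q i) (dimv P i)" for i
  proof -
    have fc: "f i \<in> carrier_mat (dimv V i) (dimv P i)" by (rule rep_homD(1)[OF rf])
    have "Q i * f'' i = (Q i * g i) * f i" using comp_homD[OF gf, of i] fc gc[of i] Qc[of i] by (simp add: assoc_dim)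
    then show ?thesis using Qg[of i] fc by simp
  qed
  have uf: "comp_hom u f'' = fZ"
  proof -
    have "u i * f'' i = fZ i" for i
    proof -
      have "u i * f'' i = vcat (1\<^sub>m (dimv W i) * f'' i) (Q i * f'' i)"
        unfolding u_def using Qc[of i] f'c[of i] by (simp add: vcat_mult_d)
      then show ?thesis unfolding fZ_def using Qf[of i] f'c[of i] by simp
    qed
    then show ?thesis by (simp add: comp_hom_def)
  qed
  have vf: "comp_hom v f'' = fZ"
  proof -
    have "v i * f'' i = fZ i" for i
    proof -
      have "v i * f'' i = vcat (1\<^sub>m (dimv W i) * f'' i) (0\<^sub>m (q i) (dimv W i) * f'' i)"
        unfolding v_def using f'c[of i] by (simp add: vcat_mult_d)
      then show ?thesis unfolding fZ_def using f'c[of i] by simp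
    qed
    then show ?thesis by (simp add: comp_hom_def)
  qed
  have hu: "comp_hom hZ u = h''"
  proof -
    have "hZ i * u i = h'' i" for i
    proof -
      have "hZ i * u i = h'' i * 1\<^sub>m (dimv W i) + 0\<^sub>m (dimv I i) (q i) * Q i"
        unfolding u_def hZ_def using Qc[of i] h'c[of i] by (simp add: hcat_vcat_d)
      then show ?thesis using Qc[of i] h'c[of i] by simp
    qed
    then show ?thesis by (simp add: comp_hom_def)
  qed
  have hv: "comp_hom hZ v = h''"
  proof -
    have "hZ i * v i = h'' i" for i
    proof -
      have "hZ i * v i = h'' i * 1\<^sub>m (dimv W i) + 0\<^sub>m (dimv I i) (q i) * 0\<^sub>m (q i) (dimv W i)"
        unfolding v_def hZ_def using h'c[of i] by (simp add: hcat_vcat_d)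
      then show ?thesis using h'c[of i] by simp
    qed
    then show ?thesis by (simp add: comp_hom_def)
  qed
  have gu: "comp_hom u g = comp_hom v g"
  proof -
    have "u i * g i = v i * g i" for i
    proof -
      have "u i * g i = vcat (1\<^sub>m (dimv W i) * g i) (Q i * g i)"
        unfolding u_def using Qc[of i] gc[of i] by (simp add: vcat_mult_d)
      also have "\<dots> = vcat (1\<^sub>m (dimv W i) * g i) (0\<^sub>m (q i) (dimv W i) * g i)" using Qg[of i] gc[of i] by simp
      also have "\<dots> = v i * g i" unfolding v_def using gc[of i] by (simp add: vcat_mult_d)
      finally show ?thesis .
    qed
    then show ?thesis by (simp add: comp_hom_def)
  qed
  have Ru: "R_hom s t P I (W, f'', h'') (Zr, fZ, hZ) u" using oZ oY ru uf hu by (simp add: R_hom_simp)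
  have Rv: "R_hom s t P I (W, f'', h'') (Zr, fZ, hZ) v" using oZ oY rv vf hv by (simp add: R_hom_simp)
  from Re have "\<forall>Z u v. R_hom s t P I (W,f'',h'') Z u \<and> R_hom s t P I (W,f'',h'') Z v \<and> comp_hom u g = comp_hom v g \<longrightarrow> u = v"
    unfolding R_epi_def by blast
  then have uv: "u = v" using Ru Rv gu by blast
  have Q0: "Q i = 0\<^sub>m (q i) (dimv W i)" for i
  proof -
    have "u i = v i" using uv by simp
    then show ?thesis unfolding u_def v_def using Qc[of i] by (intro vcat_inj2[of "1\<^sub>m (dimv W i)" "dimv W i" "dimv W i" "Q i" "q i"]) auto
  qed
  show ?thesis unfolding hom_surj_def
  proof (intro allI ballI)
    fix i and y :: "complex vec" assume y: "y \<in> carrier_vec (dimv W i)"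
    have "Q i *\<^sub>v y = 0\<^sub>v (q i)" using Q0[of i] y by (simp add: zero_mat_mult_vec)
    then show "\<exists>x \<in> carrier_vec (dimv V i). g i *\<^sub>v x = y" using Qvec[OF y] by blast
  qed
qed

lemma choice_rank:
  fixes A :: "'i \<Rightarrow> 'a::field mat"
  assumes "\<And>i. A i \<in> carrier_mat (n i) (m i)"
  shows "\<exists>r B C L R. \<forall>i. B i \<in> carrier_mat (n i) (r i) \<and> C i \<in> carrier_mat (r i) (m i) \<and> L i \<in> carrier_mat (r i) (n i)
    \<and> R i \<in> carrier_mat (m i) (r i) \<and> A i = B i * C i \<and> L i * B i = 1\<^sub>m (r i) \<and> C i * R i = 1\<^sub>m (r i)"
proof -
  have "\<forall>i. \<exists>r B C L R. B \<in> carrier_mat (n i) r \<and> C \<in> carrier_mat r (m i) \<and> L \<in> carrier_mat r (n i)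
    \<and> R \<in> carrier_mat (m i) r \<and> A i = B * C \<and> L * B = 1\<^sub>m r \<and> C * R = 1\<^sub>m r"
    using rank_fact[OF assms] by blast
  then have "\<exists>r. \<forall>i. \<exists>B C L R. B \<in> carrier_mat (n i) (r i) \<and> C \<in> carrier_mat (r i) (m i) \<and> L \<in> carrier_mat (r i) (n i)
    \<and> R \<in> carrier_mat (m i) (r i) \<and> A i = B * C \<and> L * B = 1\<^sub>m (r i) \<and> C * R = 1\<^sub>m (r i)" by (rule choice)
  then obtain r where "\<forall>i. \<exists>B C L R. B \<in> carrier_mat (n i) (r i) \<and> C \<in> carrier_mat (r i) (m i) \<and> L \<in> carrier_mat (r i) (n i)
    \<and> R \<in> carrier_mat (m i) (r i) \<and> A i = B * C \<and> L * B = 1\<^sub>m (r i) \<and> C * R = 1\<^sub>m (r i)" by blast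
  then have "\<exists>B. \<forall>i. \<exists>C L R. B i \<in> carrier_mat (n i) (r i) \<and> C \<in> carrier_mat (r i) (m i) \<and> L \<in> carrier_mat (r i) (n i)
    \<and> R \<in> carrier_mat (m i) (r i) \<and> A i = B i * C \<and> L * B i = 1\<^sub>m (r i) \<and> C * R = 1\<^sub>m (r i)" by (rule choice)
  then obtain B where "\<forall>i. \<exists>C L R. B i \<in> carrier_mat (n i) (r i) \<and> C \<in> carrier_mat (r i) (m i) \<and> L \<in> carrier_mat (r i) (n i)
    \<and> R \<in> carrier_mat (m i) (r i) \<and> A i = B i * C \<and> L * B i = 1\<^sub>m (r i) \<and> C * R = 1\<^sub>m (r i)" by blast
  then have "\<exists>C. \<forall>i. \<exists>L R. B i \<in> carrier_mat (n i) (r i) \<and> C i \<in> carrier_mat (r i) (m i) \<and> L \<in> carrier_mat (r i) (n i)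
    \<and> R \<in> carrier_mat (m i) (r i) \<and> A i = B i * C i \<and> L * B i = 1\<^sub>m (r i) \<and> C i * R = 1\<^sub>m (r i)" by (rule choice)
  then obtain C where "\<forall>i. \<exists>L R. B i \<in> carrier_mat (n i) (r i) \<and> C i \<in> carrier_mat (r i) (m i) \<and> L \<in> carrier_mat (r i) (n i)
    \<and> R \<in> carrier_mat (m i) (r i) \<and> A i = B i * C i \<and> L * B i = 1\<^sub>m (r i) \<and> C i * R = 1\<^sub>m (r i)" by blast
  then have "\<exists>L. \<forall>i. \<exists>R. B i \<in> carrier_mat (n i) (r i) \<and> C i \<in> carrier_mat (r i) (m i) \<and> L i \<in> carrier_mat (r i) (n i)
    \<and> R \<in> carrier_mat (m i) (r i) \<and> A i = B i * C i \<and> L i * B i = 1\<^sub>m (r i) \<and> C i * R = 1\<^sub>m (r i)" by (rule choice)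
  then obtain L where "\<forall>i. \<exists>R. B i \<in> carrier_mat (n i) (r i) \<and> C i \<in> carrier_mat (r i) (m i) \<and> L i \<in> carrier_mat (r i) (n i)
    \<and> R \<in> carrier_mat (m i) (r i) \<and> A i = B i * C i \<and> L i * B i = 1\<^sub>m (r i) \<and> C i * R = 1\<^sub>m (r i)" by blast
  then have "\<exists>R. \<forall>i. B i \<in> carrier_mat (n i) (r i) \<and> C i \<in> carrier_mat (r i) (m i) \<and> L i \<in> carrier_mat (r i) (n i)
    \<and> R i \<in> carrier_mat (m i) (r i) \<and> A i = B i * C i \<and> L i * B i = 1\<^sub>m (r i) \<and> C i * R i = 1\<^sub>m (r i)" by (rule choice)
  then show ?thesis by blast
qed

lemma not_surj_mono:
  fixes f h :: "'v \<Rightarrow> complex mat"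
  assumes oX: "R_obj s t P I (V,f,h)" and iP: "is_rep s t P" and iI: "is_rep s t I"
    and ns: "\<not> hom_surj P V f"
  shows "\<exists>Y g. R_mono s t P I Y (V,f,h) g \<and> \<not> R_iso s t P I Y (V,f,h) g"
proof -
  from oX have iV: "is_rep s t V" and rf: "rep_hom s t P V f" and rh: "rep_hom s t V I h" by (simp_all add: R_obj_simp)
  obtain r B C L R where BC: "\<forall>i. B i \<in> carrier_mat (dimv V i) (r i) \<and> C i \<in> carrier_mat (r i) (dimv P i) \<and> L i \<in> carrier_mat (r i) (dimv V i)
    \<and> R i \<in> carrier_mat (dimv P i) (r i) \<and> f i = B i * C i \<and> L i * B i = 1\<^sub>m (r i) \<and> C i * R i = 1\<^sub>m (r i)"
    using choice_rank[of f "dimv V" "dimv P", OF rep_homD(1)[OF rf]] by blast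
  have Bc: "B i \<in> carrier_mat (dimv V i) (r i)" and Cc: "C i \<in> carrier_mat (r i) (dimv P i)" and Lc: "L i \<in> carrier_mat (r i) (dimv V i)"
    and Rc: "R i \<in> carrier_mat (dimv P i) (r i)" and fBC: "f i = B i * C i" and LB: "L i * B i = 1\<^sub>m (r i)" and CR: "C i * R i = 1\<^sub>m (r i)" for i
    using BC by auto
  note hc = rep_homD(1)[OF rh]
  define aW where "aW al = L (t al) * amap V al * B (s al)" for al
  have aWc: "aW al \<in> carrier_mat (r (t al)) (r (s al))" for al
    unfolding aW_def by (rule mult_carrier_mat[OF mult_carrier_mat[OF Lc is_repD[OF iV]] Bc])
  have key: "amap V al * B (s al) = B (t al) * (C (t al) * amap P al * R (s al))" for al
  proof -
    note c = Bc[of "t al"] Bc[of "s al"] Cc[of "t al"] Cc[of "s al"] Rc[of "s al"] is_repD[OF iV, of al] is_repD[OF iP, of al]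
    have "amap V al * B (s al) = amap V al * B (s al) * (C (s al) * R (s al))" using CR[of "s al"] c by simp
    also have "\<dots> = (amap V al * f (s al)) * R (s al)" using fBC[of "s al"] c by (simp add: assoc_dim)
    also have "\<dots> = (f (t al) * amap P al) * R (s al)" using rep_homD(2)[OF rf, of al] by simp
    also have "\<dots> = B (t al) * (C (t al) * amap P al * R (s al))" using fBC[of "t al"] c by (simp add: assoc_dim)
    finally show ?thesis .
  qed
  have BaW: "B (t al) * aW al = amap V al * B (s al)" for al
  proof -
    note c = Bc[of "t al"] Bc[of "s al"] Cc[of "t al"] Lc[of "t al"] Rc[of "s al"] is_repD[OF iV, of al] is_repD[OF iP, of al]
    have "B (t al) * aW al = B (t al) * (L (t al) * (amap V al * B (s al)))" unfolding aW_def using c by (simp add: assoc_dim)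
    also have "\<dots> = B (t al) * ((L (t al) * B (t al)) * (C (t al) * amap P al * R (s al)))" unfolding key using c by (simp add: assoc_dim)
    also have "\<dots> = B (t al) * (C (t al) * amap P al * R (s al))" using LB[of "t al"] c by simp
    finally show ?thesis unfolding key .
  qed
  define Wr :: "('v,'a) qrep" where "Wr = (r, aW)"
  define hW where "hW i = h i * B i" for i
  have iW: "is_rep s t Wr" unfolding is_rep_def Wr_def using aWc by simp
  have rC: "rep_hom s t P Wr C" unfolding rep_hom_def
  proof (intro conjI allI)
    fix i show "C i \<in> carrier_mat (dimv Wr i) (dimv P i)" unfolding Wr_def using Cc by simp
  next
    fix al
    note c = Bc[of "t al"] Bc[of "s al"] Cc[of "t al"] Cc[of "s al"] Lc[of "t al"] is_repD[OF iV, of al] is_repD[OF iP, of al]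
    have "amap Wr al * C (s al) = L (t al) * (amap V al * f (s al))" unfolding Wr_def aW_def fBC using c by (simp add: assoc_dim)
    also have "\<dots> = L (t al) * (f (t al) * amap P al)" using rep_homD(2)[OF rf, of al] by simp
    also have "\<dots> = (L (t al) * B (t al)) * C (t al) * amap P al" unfolding fBC using c by (simp add: assoc_dim)
    also have "\<dots> = C (t al) * amap P al" using LB[of "t al"] c by simp
    finally show "C (t al) * amap P al = amap Wr al * C (s al)" by simp
  qed
  have rhW: "rep_hom s t Wr I hW" unfolding rep_hom_def
  proof (intro conjI allI)
    fix i show "hW i \<in> carrier_mat (dimv I i) (dimv Wr i)" unfolding Wr_def hW_def using Bc[of i] hc[of i] by simp
  next
    fix al
    note c = Bc[of "t al"] Bc[of "s al"] hc[of "t al"] hc[of "s al"] aWc[of al] is_repD[OF iV, of al] is_repD[OF iI, of al]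
    have "hW (t al) * amap Wr al = h (t al) * (B (t al) * aW al)" unfolding Wr_def hW_def using c by (simp add: assoc_dim)
    also have "\<dots> = (h (t al) * amap V al) * B (s al)" unfolding BaW using c by (simp add: assoc_dim)
    also have "\<dots> = (amap I al * h (s al)) * B (s al)" using rep_homD(2)[OF rh, of al] by simp
    also have "\<dots> = amap I al * hW (s al)" unfolding hW_def using c by (simp add: assoc_dim)
    finally show "hW (t al) * amap Wr al = amap I al * hW (s al)" .
  qed
  have rB: "rep_hom s t Wr V B" unfolding rep_hom_def
  proof (intro conjI allI)
    fix i show "B i \<in> carrier_mat (dimv V i) (dimv Wr i)" unfolding Wr_def using Bc by simp
  next
    fix al show "B (t al) * amap Wr al = amap V al * B (s al)" unfolding Wr_def using BaW by simp
  qed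
  have oY: "R_obj s t P I (Wr, C, hW)" using iW rC rhW by (simp add: R_obj_simp)
  have RB: "R_hom s t P I (Wr, C, hW) (V, f, h) B"
    using oY oX rB fBC by (simp add: R_hom_simp comp_hom_def hW_def fun_eq_iff)
  have mono: "R_mono s t P I (Wr, C, hW) (V, f, h) B"
    unfolding R_mono_def
  proof (intro conjI allI impI)
    show "R_hom s t P I (Wr, C, hW) (V, f, h) B" by (rule RB)
  next
    fix Z u v assume a: "R_hom s t P I Z (Wr, C, hW) u \<and> R_hom s t P I Z (Wr, C, hW) v \<and> comp_hom B u = comp_hom B v"
    obtain Zr fz hz where Z: "Z = (Zr, fz, hz)" by (cases Z) auto
    from a have ru: "rep_hom s t Zr Wr u" and rv: "rep_hom s t Zr Wr v" and Buv: "comp_hom B u = comp_hom B v"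
      unfolding Z by (simp_all add: R_hom_simp)
    show "u = v"
    proof
      fix i
      have uc: "u i \<in> carrier_mat (r i) (dimv Zr i)" using rep_homD(1)[OF ru, of i] unfolding Wr_def by simp
      have vc: "v i \<in> carrier_mat (r i) (dimv Zr i)" using rep_homD(1)[OF rv, of i] unfolding Wr_def by simp
      have "B i * u i = B i * v i" using Buv unfolding comp_hom_def by metis
      then have "L i * (B i * u i) = L i * (B i * v i)" by simp
      then have "(L i * B i) * u i = (L i * B i) * v i" using Lc[of i] Bc[of i] uc vc by (simp add: assoc_dim)
      then show "u i = v i" using LB[of i] uc vc by simp
    qed
  qed
  have noiso: "\<not> R_iso s t P I (Wr, C, hW) (V, f, h) B"
  proof
    assume "R_iso s t P I (Wr, C, hW) (V, f, h) B"
    then obtain g' where Rg': "R_hom s t P I (V, f, h) (Wr, C, hW) g'" and Bg': "comp_hom B g' = R_id (V, f, h)"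
      unfolding R_iso_def by blast
    have g'c: "g' i \<in> carrier_mat (r i) (dimv V i)" for i
      using rep_homD(1)[of s t V Wr g' i] Rg' unfolding Wr_def by (simp add: R_hom_simp)
    have "hom_surj P V f" unfolding hom_surj_def
    proof (intro allI ballI)
      fix i and y :: "complex vec" assume y: "y \<in> carrier_vec (dimv V i)"
      have Bg'i: "B i * g' i = 1\<^sub>m (dimv V i)" using Bg' unfolding comp_hom_def R_id_def by (metis fst_conv)
      have "f i *\<^sub>v (R i *\<^sub>v (g' i *\<^sub>v y)) = B i *\<^sub>v ((C i * R i) *\<^sub>v (g' i *\<^sub>v y))"
        using fBC[of i] Bc[of i] Cc[of i] Rc[of i] g'c[of i] y by (simp add: assoc_dim_vec)
      also have "\<dots> = (B i * g' i) *\<^sub>v y" using CR[of i] Bc[of i] g'c[of i] y by (simp add: assoc_dim_vec)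
      also have "\<dots> = y" using Bg'i y by simp
      finally show "\<exists>x \<in> carrier_vec (dimv P i). f i *\<^sub>v x = y" using Rc[of i] g'c[of i] y
        by (intro bexI[of _ "R i *\<^sub>v (g' i *\<^sub>v y)"]) auto
    qed
    then show False using ns by simp
  qed
  show ?thesis using mono noiso by blast
qed

lemma not_inj_epi:
  fixes f h :: "'v \<Rightarrow> complex mat"
  assumes oX: "R_obj s t P I (V,f,h)" and iP: "is_rep s t P" and iI: "is_rep s t I"
    and ni: "\<not> hom_inj V I h"
  shows "\<exists>Y g. R_epi s t P I (V,f,h) Y g \<and> \<not> R_iso s t P I (V,f,h) Y g"
proof -
  from oX have iV: "is_rep s t V" and rf: "rep_hom s t P V f" and rh: "rep_hom s t V I h" by (simp_all add: R_obj_simp)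
  obtain r B C L R where BC: "\<forall>i. B i \<in> carrier_mat (dimv I i) (r i) \<and> C i \<in> carrier_mat (r i) (dimv V i) \<and> L i \<in> carrier_mat (r i) (dimv I i)
    \<and> R i \<in> carrier_mat (dimv V i) (r i) \<and> h i = B i * C i \<and> L i * B i = 1\<^sub>m (r i) \<and> C i * R i = 1\<^sub>m (r i)"
    using choice_rank[of h "dimv I" "dimv V", OF rep_homD(1)[OF rh]] by blast
  have Bc: "B i \<in> carrier_mat (dimv I i) (r i)" and Cc: "C i \<in> carrier_mat (r i) (dimv V i)" and Lc: "L i \<in> carrier_mat (r i) (dimv I i)"
    and Rc: "R i \<in> carrier_mat (dimv V i) (r i)" and hBC: "h i = B i * C i" and LB: "L i * B i = 1\<^sub>m (r i)" and CR: "C i * R i = 1\<^sub>m (r i)" for i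
    using BC by auto
  note fc = rep_homD(1)[OF rf]
  define aW where "aW al = C (t al) * amap V al * R (s al)" for al
  have aWc: "aW al \<in> carrier_mat (r (t al)) (r (s al))" for al
    unfolding aW_def by (rule mult_carrier_mat[OF mult_carrier_mat[OF Cc is_repD[OF iV]] Rc])
  have key: "C (t al) * amap V al = (L (t al) * amap I al * B (s al)) * C (s al)" for al
  proof -
    note c = Bc[of "t al"] Bc[of "s al"] Cc[of "t al"] Cc[of "s al"] Lc[of "t al"] is_repD[OF iV, of al] is_repD[OF iI, of al]
    have "C (t al) * amap V al = (L (t al) * B (t al)) * C (t al) * amap V al" using LB[of "t al"] c by simp
    also have "\<dots> = L (t al) * (h (t al) * amap V al)" using hBC[of "t al"] c by (simp add: assoc_dim)
    also have "\<dots> = L (t al) * (amap I al * h (s al))" using rep_homD(2)[OF rh, of al] by simp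
    also have "\<dots> = (L (t al) * amap I al * B (s al)) * C (s al)" using hBC[of "s al"] c by (simp add: assoc_dim)
    finally show ?thesis .
  qed
  have aWC: "aW al * C (s al) = C (t al) * amap V al" for al
  proof -
    note c = Bc[of "t al"] Bc[of "s al"] Cc[of "t al"] Cc[of "s al"] Lc[of "t al"] Rc[of "s al"] is_repD[OF iV, of al] is_repD[OF iI, of al]
    have "aW al * C (s al) = (C (t al) * amap V al) * R (s al) * C (s al)" unfolding aW_def by simp
    also have "\<dots> = (L (t al) * amap I al * B (s al)) * (C (s al) * R (s al)) * C (s al)" unfolding key using c by (simp add: assoc_dim)
    also have "\<dots> = (L (t al) * amap I al * B (s al)) * C (s al)" using CR[of "s al"] c by simp
    finally show ?thesis unfolding key .
  qed
  define Wr :: "('v,'a) qrep" where "Wr = (r, aW)"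
  define fW where "fW i = C i * f i" for i
  have iW: "is_rep s t Wr" unfolding is_rep_def Wr_def using aWc by simp
  have rfW: "rep_hom s t P Wr fW" unfolding rep_hom_def
  proof (intro conjI allI)
    fix i show "fW i \<in> carrier_mat (dimv Wr i) (dimv P i)" unfolding Wr_def fW_def using Cc[of i] fc[of i] by simp
  next
    fix al
    note c = Cc[of "t al"] Cc[of "s al"] fc[of "t al"] fc[of "s al"] aWc[of al] is_repD[OF iV, of al] is_repD[OF iP, of al]
    have "fW (t al) * amap P al = C (t al) * (f (t al) * amap P al)" unfolding fW_def using c by (simp add: assoc_dim)
    also have "\<dots> = (C (t al) * amap V al) * f (s al)" using rep_homD(2)[OF rf, of al] c by (simp add: assoc_dim)
    also have "\<dots> = aW al * (C (s al) * f (s al))" unfolding aWC[symmetric] using c by (simp add: assoc_dim)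
    finally show "fW (t al) * amap P al = amap Wr al * fW (s al)" unfolding Wr_def fW_def by simp
  qed
  have rB: "rep_hom s t Wr I B" unfolding rep_hom_def
  proof (intro conjI allI)
    fix i show "B i \<in> carrier_mat (dimv I i) (dimv Wr i)" unfolding Wr_def using Bc by simp
  next
    fix al
    note c = Bc[of "t al"] Bc[of "s al"] Cc[of "t al"] Cc[of "s al"] Rc[of "s al"] is_repD[OF iV, of al] is_repD[OF iI, of al]
    have "B (t al) * aW al = (h (t al) * amap V al) * R (s al)" unfolding aW_def hBC using c by (simp add: assoc_dim)
    also have "\<dots> = (amap I al * h (s al)) * R (s al)" using rep_homD(2)[OF rh, of al] by simp
    also have "\<dots> = amap I al * B (s al) * (C (s al) * R (s al))" unfolding hBC using c by (simp add: assoc_dim)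
    also have "\<dots> = amap I al * B (s al)" using CR[of "s al"] c by simp
    finally show "B (t al) * amap Wr al = amap I al * B (s al)" unfolding Wr_def by simp
  qed
  have rC: "rep_hom s t V Wr C" unfolding rep_hom_def
  proof (intro conjI allI)
    fix i show "C i \<in> carrier_mat (dimv Wr i) (dimv V i)" unfolding Wr_def using Cc by simp
  next
    fix al show "C (t al) * amap V al = amap Wr al * C (s al)" unfolding Wr_def using aWC by simp
  qed
  have oY: "R_obj s t P I (Wr, fW, B)" using iW rfW rB by (simp add: R_obj_simp)
  have RC: "R_hom s t P I (V, f, h) (Wr, fW, B) C"
    using oY oX rC hBC by (simp add: R_hom_simp comp_hom_def fW_def fun_eq_iff)
  have epi: "R_epi s t P I (V, f, h) (Wr, fW, B) C"
    unfolding R_epi_def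
  proof (intro conjI allI impI)
    show "R_hom s t P I (V, f, h) (Wr, fW, B) C" by (rule RC)
  next
    fix Z u v assume a: "R_hom s t P I (Wr, fW, B) Z u \<and> R_hom s t P I (Wr, fW, B) Z v \<and> comp_hom u C = comp_hom v C"
    obtain Zr fz hz where Z: "Z = (Zr, fz, hz)" by (cases Z) auto
    from a have ru: "rep_hom s t Wr Zr u" and rv: "rep_hom s t Wr Zr v" and Cuv: "comp_hom u C = comp_hom v C"
      unfolding Z by (simp_all add: R_hom_simp)
    show "u = v"
    proof
      fix i
      have uc: "u i \<in> carrier_mat (dimv Zr i) (r i)" using rep_homD(1)[OF ru, of i] unfolding Wr_def by simp
      have vc: "v i \<in> carrier_mat (dimv Zr i) (r i)" using rep_homD(1)[OF rv, of i] unfolding Wr_def by simp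
      have "u i * C i = v i * C i" using Cuv unfolding comp_hom_def by metis
      then have "(u i * C i) * R i = (v i * C i) * R i" by simp
      then have "u i * (C i * R i) = v i * (C i * R i)" using Cc[of i] Rc[of i] uc vc by (simp add: assoc_dim)
      then show "u i = v i" using CR[of i] uc vc by simp
    qed
  qed
  have noiso: "\<not> R_iso s t P I (V, f, h) (Wr, fW, B) C"
  proof
    assume "R_iso s t P I (V, f, h) (Wr, fW, B) C"
    then obtain g' where Rg': "R_hom s t P I (Wr, fW, B) (V, f, h) g'" and g'C: "comp_hom g' C = R_id (V, f, h)"
      unfolding R_iso_def by blast
    have g'c: "g' i \<in> carrier_mat (dimv V i) (r i)" for i
      using rep_homD(1)[of s t Wr V g' i] Rg' unfolding Wr_def by (simp add: R_hom_simp)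
    have "hom_inj V I h" unfolding hom_inj_def
    proof (intro allI ballI impI)
      fix i and x y :: "complex vec" assume x: "x \<in> carrier_vec (dimv V i)" and y: "y \<in> carrier_vec (dimv V i)"
        and eq: "h i *\<^sub>v x = h i *\<^sub>v y"
      have g'Ci: "g' i * C i = 1\<^sub>m (dimv V i)" using g'C unfolding comp_hom_def R_id_def by (metis fst_conv)
      have Cx: "C i *\<^sub>v x = (L i * B i) *\<^sub>v (C i *\<^sub>v x)" using LB[of i] Cc[of i] x by simp
      also have "\<dots> = L i *\<^sub>v (h i *\<^sub>v x)" using hBC[of i] Lc[of i] Bc[of i] Cc[of i] x by (simp add: assoc_dim_vec)
      also have "\<dots> = L i *\<^sub>v (h i *\<^sub>v y)" using eq by simp
      also have "\<dots> = (L i * B i) *\<^sub>v (C i *\<^sub>v y)" using hBC[of i] Lc[of i] Bc[of i] Cc[of i] y by (simp add: assoc_dim_vec)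
      also have "\<dots> = C i *\<^sub>v y" using LB[of i] Cc[of i] y by simp
      finally have "C i *\<^sub>v x = C i *\<^sub>v y" .
      then have "(g' i * C i) *\<^sub>v x = (g' i * C i) *\<^sub>v y" using g'c[of i] Cc[of i] x y by (simp add: assoc_dim_vec)
      then show "x = y" using g'Ci x y by simp
    qed
    then show False using ni by simp
  qed
  show ?thesis using epi noiso by blast
qed

theorem mainTheorem13:
  fixes s t :: "'a::finite \<Rightarrow> 'v::finite"
    and P I V :: "('v,'a) qrep" and f h :: "'v \<Rightarrow> complex mat"
  assumes "acyclic_quiver s t"
    and "projective_rep s t P"
    and "injective_rep s t I"
    and "R_obj s t P I (V, f, h)"
  shows "R_simple s t P I (V, f, h) \<longleftrightarrow> hom_surj P V f \<and> hom_inj V I h"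
proof -
  have iP: "is_rep s t P" using assms(2) by (simp add: projective_rep_def)
  have iI: "is_rep s t I" using assms(3) by (simp add: injective_rep_def)
  note oX = assms(4)
  show ?thesis
  proof
    assume sim: "R_simple s t P I (V, f, h)"
    show "hom_surj P V f \<and> hom_inj V I h"
    proof
      show "hom_surj P V f"
      proof (rule ccontr)
        assume "\<not> hom_surj P V f"
        from not_surj_mono[OF oX iP iI this] sim show False unfolding R_simple_def by blast
      qed
      show "hom_inj V I h"
      proof (rule ccontr)
        assume "\<not> hom_inj V I h"
        from not_inj_epi[OF oX iP iI this] sim show False unfolding R_simple_def by blast
      qed
    qed
  next
    assume "hom_surj P V f \<and> hom_inj V I h"
    then have fs: "hom_surj P V f" and hi: "hom_inj V I h" by auto
    have A: "R_iso s t P I Y (V, f, h) g" if m: "R_mono s t P I Y (V, f, h) g" for Y g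
    proof -
      obtain W f' h' where Y: "Y = (W, f', h')" by (cases Y) auto
      have m': "R_mono s t P I (W, f', h') (V, f, h) g" using m Y by simp
      have Rh: "R_hom s t P I (W, f', h') (V, f, h) g" using m' by (simp add: R_mono_def)
      then have rg: "rep_hom s t W V g" and gf: "comp_hom g f' = f" and rf': "rep_hom s t P W f'"
        by (simp_all add: R_hom_simp R_obj_simp)
      have inj: "hom_inj W V g" by (rule mono_inj[OF m' iP iI])
      have surj: "hom_surj W V g" unfolding hom_surj_def
      proof (intro allI ballI)
        fix i and y :: "complex vec" assume y: "y \<in> carrier_vec (dimv V i)"
        obtain x where x: "x \<in> carrier_vec (dimv P i)" and fx: "f i *\<^sub>v x = y" using fs y unfolding hom_surj_def by blast
        have "g i *\<^sub>v (f' i *\<^sub>v x) = (g i * f' i) *\<^sub>v x" using rep_homD(1)[OF rg, of i] rep_homD(1)[OF rf', of i] x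
          by (simp add: assoc_dim_vec)
        also have "\<dots> = y" using comp_homD[OF gf, of i] fx by simp
        finally show "\<exists>x \<in> carrier_vec (dimv W i). g i *\<^sub>v x = y" using rep_homD(1)[OF rf', of i] x by (intro bexI[of _ "f' i *\<^sub>v x"]) auto
      qed
      show ?thesis unfolding Y by (rule bij_iso[OF Rh surj inj])
    qed
    have B: "R_iso s t P I (V, f, h) Y g" if e: "R_epi s t P I (V, f, h) Y g" for Y g
    proof -
      obtain W f'' h'' where Y: "Y = (W, f'', h'')" by (cases Y) auto
      have e': "R_epi s t P I (V, f, h) (W, f'', h'') g" using e Y by simp
      have Rh: "R_hom s t P I (V, f, h) (W, f'', h'') g" using e' by (simp add: R_epi_def)
      then have rg: "rep_hom s t V W g" and hg: "comp_hom h'' g = h" and rh'': "rep_hom s t W I h''"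
        by (simp_all add: R_hom_simp R_obj_simp)
      have surj: "hom_surj V W g" by (rule epi_surj[OF e' iP iI])
      have inj: "hom_inj V W g" unfolding hom_inj_def
      proof (intro allI ballI impI)
        fix i and x y :: "complex vec" assume x: "x \<in> carrier_vec (dimv V i)" and y: "y \<in> carrier_vec (dimv V i)"
          and eq: "g i *\<^sub>v x = g i *\<^sub>v y"
        have "h i *\<^sub>v x = h'' i *\<^sub>v (g i *\<^sub>v x)" using comp_homD[OF hg, of i] rep_homD(1)[OF rg, of i] rep_homD(1)[OF rh'', of i] x
          by (simp add: assoc_dim_vec)
        also have "\<dots> = h'' i *\<^sub>v (g i *\<^sub>v y)" using eq by simp
        also have "\<dots> = h i *\<^sub>v y" using comp_homD[OF hg, of i] rep_homD(1)[OF rg, of i] rep_homD(1)[OF rh'', of i] y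
          by (simp add: assoc_dim_vec)
        finally show "x = y" using hi x y unfolding hom_inj_def by blast
      qed
      show ?thesis unfolding Y by (rule bij_iso[OF Rh surj inj])
    qed
    show "R_simple s t P I (V, f, h)" unfolding R_simple_def using A B by blast
  qed
qed

end
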